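(* Let $(\mathcal{B},d)$ be a dg-coalgebra over a field $k$ with counit, and let $M$ be a graded $k$-vector space. Let $d_M$ be a differential on the free (cofree) $\mathcal{B}$-comodule $\mathcal{B}\otimes M$ making it a dg-comodule over $\mathcal{B}$, and let $\overline{d}_M:\mathcal{B}\otimes M\to M$ be its component (so $d_M(b\otimes m)=(\mathrm{id}\otimes\overline{d}_M)(\Delta(b)\otimes m)+db\otimes m$). Consider $\operatorname{Hom}_{gr}(\mathcal{B},M)$ as a right module over the dual graded algebra $\mathcal{B}^*$ via $\phi\cdot b^*=(\phi\otimes b^* )\circ\Delta$. Then the map $$d_M^{\vee}(\phi)(b)=\sum_i(-1)^{\deg b_i\deg\phi}\,\overline{d}_M(b_i\otimes\phi(b_i'))-(-1)^{\deg\phi}\phi(db),\qquad \Delta(b)=\sum_ib_i\otimes b_i',$$ is a differential of degree $1$ making $\operatorname{Hom}_{gr}(\mathcal{B},M)$ a right dg-module over the dg-algebra $(\mathcal{B}^*,d)$. Moreover, this construction extends to a dg-functor from the dg-category of dg-comodules over $\mathcal{B}$ that are free as $\mathcal{B}$-comodules to the dg-category of right dg-modules over $\mathcal{B}^*$, sending a comodule morphism $f:\mathcal{B}\otimes M\to\mathcal{B}\otimes M'$ with component $\overline{f}:\mathcal{B}\otimes M\to M'$ to $f^{\vee}(\phi)(b)=\sum_i(-1)^{\deg b_i\deg\phi}\overline{f}(b_i\otimes\phi(b_i'))$.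
   Context: For graded vector spaces $V,W$, $\operatorname{Hom}_{gr}(V,W)=\bigoplus_n\operatorname{Hom}(V,W)_n$ with $\operatorname{Hom}(V,W)_n=\prod_i\operatorname{Hom}(V_i,W_{i+n})$. The dual dg-algebra $\mathcal{B}^*$ has differential $(db^* )(b)=(-1)^{\deg b}b^*(db)$ and product $(b_1^*b_2^* )(b)=\sum_i(-1)^{\deg b_i\deg b_i'}b_1^*(b_i)b_2^*(b_i')$. In the dg-category of dg-comodules (resp. dg-modules), $\operatorname{Hom}^n$ consists of degree $n$ comodule (resp. module) maps, with differential $f\mapsto d\circ f-(-1)^{\deg f}f\circ d$ and composition of maps. *)

theory Defs
  imports "HOL-Library.Poly_Mapping" "HOL-Library.Function_Algebras"
begin

text \<open>
  A graded k-vector space is represented by a homogeneous basis: a type 'a of basis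
  vectors together with a degree function deg :: 'a => int.  The vectors are the
  finitely supported coefficient functions 'a =>0 'k.  A linear map V -> W is given
  by its values on the basis, f :: 'a => ('c =>0 'k), and 'lin f' is its linear
  extension.  Tensor products of free spaces have the product basis, with additive
  degree.  Every graded vector space over a field has a homogeneous basis, so this
  loses no generality.
\<close>

definition ksign :: "int \<Rightarrow> 'k::field" where
  "ksign n = (if even n then 1 else - 1)"

definition sc :: "'k::field \<Rightarrow> ('a \<Rightarrow>\<^sub>0 'k) \<Rightarrow> ('a \<Rightarrow>\<^sub>0 'k)" where
  "sc c v = Poly_Mapping.map (\<lambda>x. c * x) v"

definition bvec :: "'a \<Rightarrow> ('a \<Rightarrow>\<^sub>0 'k::field)" where
  "bvec a = Poly_Mapping.single a 1"

definition lin :: "('a \<Rightarrow> ('c \<Rightarrow>\<^sub>0 'k::field)) \<Rightarrow> ('a \<Rightarrow>\<^sub>0 'k) \<Rightarrow> ('c \<Rightarrow>\<^sub>0 'k)" where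
  "lin f v = (\<Sum>a\<in>Poly_Mapping.keys v. sc (Poly_Mapping.lookup v a) (f a))"

definition lfun :: "('a \<Rightarrow> 'k::field) \<Rightarrow> ('a \<Rightarrow>\<^sub>0 'k) \<Rightarrow> 'k" where
  "lfun f v = (\<Sum>a\<in>Poly_Mapping.keys v. Poly_Mapping.lookup v a * f a)"

definition ltens :: "'a \<Rightarrow> ('c \<Rightarrow>\<^sub>0 'k::field) \<Rightarrow> ('a \<times> 'c \<Rightarrow>\<^sub>0 'k)" where
  "ltens a w = lin (\<lambda>z. bvec (a, z)) w"

definition rtens :: "('a \<Rightarrow>\<^sub>0 'k::field) \<Rightarrow> 'c \<Rightarrow> ('a \<times> 'c \<Rightarrow>\<^sub>0 'k)" where
  "rtens v c = lin (\<lambda>z. bvec (z, c)) v"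

definition tdeg :: "('b \<Rightarrow> int) \<Rightarrow> ('m \<Rightarrow> int) \<Rightarrow> 'b \<times> 'm \<Rightarrow> int" where
  "tdeg degB degM = (\<lambda>(b, m). degB b + degM m)"

text \<open>
  A dg-coalgebra with counit (B, Delta, eps, d): B has homogeneous basis 'b with degrees degB;
  Delta (comultiplication, degree 0), eps (counit, degree 0) and d (differential of degree 1)
  are given on basis vectors.  Koszul sign rule: (f (x) g)(x (x) y) = (-1)^(|g||x|) f x (x) g y.
\<close>
definition dg_coalgebra ::
  "('b \<Rightarrow> int) \<Rightarrow> ('b \<Rightarrow> ('b \<times> 'b \<Rightarrow>\<^sub>0 'k::field)) \<Rightarrow> ('b \<Rightarrow> 'k) \<Rightarrow> ('b \<Rightarrow> ('b \<Rightarrow>\<^sub>0 'k)) \<Rightarrow> bool"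
where
  "dg_coalgebra degB Delta eps d \<longleftrightarrow>
     (\<forall>j. \<forall>(p, q)\<in>Poly_Mapping.keys (Delta j). degB p + degB q = degB j) \<and>
     (\<forall>j. eps j \<noteq> 0 \<longrightarrow> degB j = 0) \<and>
     (\<forall>j. \<forall>p\<in>Poly_Mapping.keys (d j). degB p = degB j + 1) \<and>
     \<comment> \<open>coassociativity: (Delta (x) id) Delta = (id (x) Delta) Delta\<close>
     (\<forall>j. lin (\<lambda>(p, q). lin (\<lambda>(a, b). bvec (a, (b, q))) (Delta p)) (Delta j)
          = lin (\<lambda>(p, q). ltens p (Delta q)) (Delta j)) \<and>
     \<comment> \<open>counit: (eps (x) id) Delta = id = (id (x) eps) Delta\<close>
     (\<forall>j. lin (\<lambda>(p, q). sc (eps p) (bvec q)) (Delta j) = bvec j) \<and>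
     (\<forall>j. lin (\<lambda>(p, q). sc (eps q) (bvec p)) (Delta j) = bvec j) \<and>
     \<comment> \<open>d o d = 0\<close>
     (\<forall>j. lin d (d j) = 0) \<and>
     \<comment> \<open>d is a coderivation: Delta d = (d (x) id + id (x) d) Delta\<close>
     (\<forall>j. lin Delta (d j)
          = lin (\<lambda>(p, q). rtens (d p) q + sc (ksign (degB p)) (ltens p (d q))) (Delta j)) \<and>
     \<comment> \<open>the counit is a chain map: eps o d = 0\<close>
     (\<forall>j. lfun eps (d j) = 0)"

text \<open>A linear form on B is given by its values on the basis, beta :: 'b => 'k.
  Hom_gr(B,k) is the direct sum over n of Hom(B_{-n}, k): the forms that are nonzero
  on basis vectors of only finitely many degrees.\<close>
definition dual_el :: "('b \<Rightarrow> int) \<Rightarrow> ('b \<Rightarrow> 'k::field) \<Rightarrow> bool" where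
  "dual_el degB beta \<longleftrightarrow> finite {degB j | j. beta j \<noteq> 0}"

definition dual_homog :: "('b \<Rightarrow> int) \<Rightarrow> int \<Rightarrow> ('b \<Rightarrow> 'k::field) \<Rightarrow> bool" where
  "dual_homog degB n beta \<longleftrightarrow> (\<forall>j. beta j \<noteq> 0 \<longrightarrow> degB j = - n)"

definition dual_d :: "('b \<Rightarrow> int) \<Rightarrow> ('b \<Rightarrow> ('b \<Rightarrow>\<^sub>0 'k::field)) \<Rightarrow> ('b \<Rightarrow> 'k) \<Rightarrow> ('b \<Rightarrow> 'k)" where
  "dual_d degB d beta = (\<lambda>j. ksign (degB j) * lfun beta (d j))"

definition dual_mult ::
  "('b \<Rightarrow> int) \<Rightarrow> ('b \<Rightarrow> ('b \<times> 'b \<Rightarrow>\<^sub>0 'k::field)) \<Rightarrow> ('b \<Rightarrow> 'k) \<Rightarrow> ('b \<Rightarrow> 'k) \<Rightarrow> ('b \<Rightarrow> 'k)"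
where
  "dual_mult degB Delta beta1 beta2 =
     (\<lambda>j. \<Sum>(p, q)\<in>Poly_Mapping.keys (Delta j). Poly_Mapping.lookup (Delta j) (p, q) * ksign (degB p * degB q) * beta1 p * beta2 q)"

text \<open>A linear map phi : B -> M is given by its values on the basis of B.\<close>
definition hom_homog :: "('b \<Rightarrow> int) \<Rightarrow> ('m \<Rightarrow> int) \<Rightarrow> int \<Rightarrow> ('b \<Rightarrow> ('m \<Rightarrow>\<^sub>0 'k::field)) \<Rightarrow> bool" where
  "hom_homog degB degM n phi \<longleftrightarrow> (\<forall>j. \<forall>x\<in>Poly_Mapping.keys (phi j). degM x = degB j + n)"

definition hdegs :: "('b \<Rightarrow> int) \<Rightarrow> ('m \<Rightarrow> int) \<Rightarrow> ('b \<Rightarrow> ('m \<Rightarrow>\<^sub>0 'k::field)) \<Rightarrow> int set" where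
  "hdegs degB degM phi = {degM x - degB j | j x. x \<in> Poly_Mapping.keys (phi j)}"

text \<open>Hom_gr(B,M) = direct sum over n of Hom(B,M)_n = prod_i Hom(B_i, M_{i+n})\<close>
definition hom_gr :: "('b \<Rightarrow> int) \<Rightarrow> ('m \<Rightarrow> int) \<Rightarrow> ('b \<Rightarrow> ('m \<Rightarrow>\<^sub>0 'k::field)) \<Rightarrow> bool" where
  "hom_gr degB degM phi \<longleftrightarrow> finite (hdegs degB degM phi)"

definition hpart :: "('b \<Rightarrow> int) \<Rightarrow> ('m \<Rightarrow> int) \<Rightarrow> int \<Rightarrow> ('b \<Rightarrow> ('m \<Rightarrow>\<^sub>0 'k::field)) \<Rightarrow> ('b \<Rightarrow> ('m \<Rightarrow>\<^sub>0 'k))" where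
  "hpart degB degM n phi = (\<lambda>j. lin (\<lambda>x. if degM x = degB j + n then bvec x else 0) (phi j))"

text \<open>linear extension of an operation defined on homogeneous elements (op n acts on degree n)\<close>
definition hext ::
  "('b \<Rightarrow> int) \<Rightarrow> ('m \<Rightarrow> int) \<Rightarrow> (int \<Rightarrow> ('b \<Rightarrow> ('m \<Rightarrow>\<^sub>0 'k::field)) \<Rightarrow> ('b \<Rightarrow> ('n \<Rightarrow>\<^sub>0 'k)))
     \<Rightarrow> ('b \<Rightarrow> ('m \<Rightarrow>\<^sub>0 'k)) \<Rightarrow> ('b \<Rightarrow> ('n \<Rightarrow>\<^sub>0 'k))"
where
  "hext degB degM op phi = (\<lambda>j. \<Sum>n\<in>hdegs degB degM phi. op n (hpart degB degM n phi) j)"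

definition hsc :: "'k::field \<Rightarrow> ('b \<Rightarrow> ('m \<Rightarrow>\<^sub>0 'k)) \<Rightarrow> ('b \<Rightarrow> ('m \<Rightarrow>\<^sub>0 'k))" where
  "hsc c phi = (\<lambda>j. sc c (phi j))"

text \<open>right B*-module structure: phi . b* = (phi (x) b*) o Delta, with the Koszul sign
  (-1)^(deg b* deg b_i) = (-1)^(deg b_i deg b_i') on the nonzero terms\<close>
definition act ::
  "('b \<Rightarrow> int) \<Rightarrow> ('b \<Rightarrow> ('b \<times> 'b \<Rightarrow>\<^sub>0 'k::field)) \<Rightarrow> ('b \<Rightarrow> ('m \<Rightarrow>\<^sub>0 'k)) \<Rightarrow> ('b \<Rightarrow> 'k) \<Rightarrow> ('b \<Rightarrow> ('m \<Rightarrow>\<^sub>0 'k))"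
where
  "act degB Delta phi beta =
     (\<lambda>j. \<Sum>(p, q)\<in>Poly_Mapping.keys (Delta j). sc (Poly_Mapping.lookup (Delta j) (p, q) * ksign (degB p * degB q) * beta q) (phi p))"

definition coact :: "('b \<Rightarrow> ('b \<times> 'b \<Rightarrow>\<^sub>0 'k::field)) \<Rightarrow> 'b \<times> 'm \<Rightarrow> ('b \<times> ('b \<times> 'm) \<Rightarrow>\<^sub>0 'k)" where
  "coact Delta = (\<lambda>(j, x). lin (\<lambda>(p, q). bvec (p, (q, x))) (Delta j))"

definition free_dg_comodule ::
  "('b \<Rightarrow> int) \<Rightarrow> ('b \<Rightarrow> ('b \<times> 'b \<Rightarrow>\<^sub>0 'k::field)) \<Rightarrow> ('b \<Rightarrow> ('b \<Rightarrow>\<^sub>0 'k))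
     \<Rightarrow> ('m \<Rightarrow> int) \<Rightarrow> ('b \<times> 'm \<Rightarrow> ('b \<times> 'm \<Rightarrow>\<^sub>0 'k)) \<Rightarrow> bool"
where
  "free_dg_comodule degB Delta d degM dM \<longleftrightarrow>
     (\<forall>y. \<forall>z\<in>Poly_Mapping.keys (dM y). tdeg degB degM z = tdeg degB degM y + 1) \<and>
     (\<forall>y. lin dM (dM y) = 0) \<and>
     (\<forall>y. lin (coact Delta) (dM y)
          = lin (\<lambda>(p, z). rtens (d p) z + sc (ksign (degB p)) (ltens p (dM z))) (coact Delta y))"

definition comod_hom ::
  "('b \<Rightarrow> int) \<Rightarrow> ('b \<Rightarrow> ('b \<times> 'b \<Rightarrow>\<^sub>0 'k::field)) \<Rightarrow> ('m \<Rightarrow> int) \<Rightarrow> ('n \<Rightarrow> int) \<Rightarrow> int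
     \<Rightarrow> ('b \<times> 'm \<Rightarrow> ('b \<times> 'n \<Rightarrow>\<^sub>0 'k)) \<Rightarrow> bool"
where
  "comod_hom degB Delta degM degN n f \<longleftrightarrow>
     (\<forall>y. \<forall>z\<in>Poly_Mapping.keys (f y). tdeg degB degN z = tdeg degB degM y + n) \<and>
     (\<forall>y. lin (coact Delta) (f y)
          = lin (\<lambda>(p, z). sc (ksign (n * degB p)) (ltens p (f z))) (coact Delta y))"

text \<open>component  F-bar = (eps (x) id) o F : B (x) M -> N  of a map F : B (x) M -> B (x) N\<close>
definition comp :: "('b \<Rightarrow> 'k::field) \<Rightarrow> ('b \<times> 'm \<Rightarrow> ('b \<times> 'n \<Rightarrow>\<^sub>0 'k)) \<Rightarrow> ('b \<times> 'm \<Rightarrow> ('n \<Rightarrow>\<^sub>0 'k))" where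
  "comp eps F = (\<lambda>y. lin (\<lambda>(p, z). sc (eps p) (bvec z)) (F y))"

definition dvee_h ::
  "('b \<Rightarrow> int) \<Rightarrow> ('b \<Rightarrow> ('b \<times> 'b \<Rightarrow>\<^sub>0 'k::field)) \<Rightarrow> ('b \<Rightarrow> 'k) \<Rightarrow> ('b \<Rightarrow> ('b \<Rightarrow>\<^sub>0 'k))
     \<Rightarrow> ('b \<times> 'm \<Rightarrow> ('b \<times> 'm \<Rightarrow>\<^sub>0 'k)) \<Rightarrow> int \<Rightarrow> ('b \<Rightarrow> ('m \<Rightarrow>\<^sub>0 'k)) \<Rightarrow> ('b \<Rightarrow> ('m \<Rightarrow>\<^sub>0 'k))"
where
  "dvee_h degB Delta eps d dM n phi =
     (\<lambda>j. lin (\<lambda>(p, q). sc (ksign (degB p * n)) (lin (comp eps dM) (ltens p (phi q)))) (Delta j)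
          - sc (ksign n) (lin phi (d j)))"

definition dvee ::
  "('b \<Rightarrow> int) \<Rightarrow> ('b \<Rightarrow> ('b \<times> 'b \<Rightarrow>\<^sub>0 'k::field)) \<Rightarrow> ('b \<Rightarrow> 'k) \<Rightarrow> ('b \<Rightarrow> ('b \<Rightarrow>\<^sub>0 'k))
     \<Rightarrow> ('m \<Rightarrow> int) \<Rightarrow> ('b \<times> 'm \<Rightarrow> ('b \<times> 'm \<Rightarrow>\<^sub>0 'k)) \<Rightarrow> ('b \<Rightarrow> ('m \<Rightarrow>\<^sub>0 'k)) \<Rightarrow> ('b \<Rightarrow> ('m \<Rightarrow>\<^sub>0 'k))"
where
  "dvee degB Delta eps d degM dM = hext degB degM (dvee_h degB Delta eps d dM)"

definition fvee_h ::
  "('b \<Rightarrow> int) \<Rightarrow> ('b \<Rightarrow> ('b \<times> 'b \<Rightarrow>\<^sub>0 'k::field)) \<Rightarrow> ('b \<Rightarrow> 'k)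
     \<Rightarrow> ('b \<times> 'm \<Rightarrow> ('b \<times> 'n \<Rightarrow>\<^sub>0 'k)) \<Rightarrow> int \<Rightarrow> ('b \<Rightarrow> ('m \<Rightarrow>\<^sub>0 'k)) \<Rightarrow> ('b \<Rightarrow> ('n \<Rightarrow>\<^sub>0 'k))"
where
  "fvee_h degB Delta eps f n phi =
     (\<lambda>j. lin (\<lambda>(p, q). sc (ksign (degB p * n)) (lin (comp eps f) (ltens p (phi q)))) (Delta j))"

definition fvee ::
  "('b \<Rightarrow> int) \<Rightarrow> ('b \<Rightarrow> ('b \<times> 'b \<Rightarrow>\<^sub>0 'k::field)) \<Rightarrow> ('b \<Rightarrow> 'k) \<Rightarrow> ('m \<Rightarrow> int)
     \<Rightarrow> ('b \<times> 'm \<Rightarrow> ('b \<times> 'n \<Rightarrow>\<^sub>0 'k)) \<Rightarrow> ('b \<Rightarrow> ('m \<Rightarrow>\<^sub>0 'k)) \<Rightarrow> ('b \<Rightarrow> ('n \<Rightarrow>\<^sub>0 'k))"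
where
  "fvee degB Delta eps degM f = hext degB degM (fvee_h degB Delta eps f)"

definition right_dg_module_hom ::
  "('b \<Rightarrow> int) \<Rightarrow> ('b \<Rightarrow> ('b \<times> 'b \<Rightarrow>\<^sub>0 'k::field)) \<Rightarrow> ('b \<Rightarrow> 'k) \<Rightarrow> ('b \<Rightarrow> ('b \<Rightarrow>\<^sub>0 'k))
     \<Rightarrow> ('m \<Rightarrow> int) \<Rightarrow> (('b \<Rightarrow> ('m \<Rightarrow>\<^sub>0 'k)) \<Rightarrow> ('b \<Rightarrow> ('m \<Rightarrow>\<^sub>0 'k))) \<Rightarrow> bool"
where
  "right_dg_module_hom degB Delta eps d degM D \<longleftrightarrow>
     \<comment> \<open>D is a k-linear differential of degree 1 on Hom_gr(B,M)\<close>
     (\<forall>phi. hom_gr degB degM phi \<longrightarrow> hom_gr degB degM (D phi)) \<and>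
     (\<forall>n phi. hom_homog degB degM n phi \<longrightarrow> hom_homog degB degM (n + 1) (D phi)) \<and>
     (\<forall>phi psi. hom_gr degB degM phi \<longrightarrow> hom_gr degB degM psi \<longrightarrow> D (phi + psi) = D phi + D psi) \<and>
     (\<forall>c phi. hom_gr degB degM phi \<longrightarrow> D (hsc c phi) = hsc c (D phi)) \<and>
     (\<forall>phi. hom_gr degB degM phi \<longrightarrow> D (D phi) = 0) \<and>
     \<comment> \<open>graded right module over B*\<close>
     (\<forall>phi beta. hom_gr degB degM phi \<longrightarrow> dual_el degB beta \<longrightarrow> hom_gr degB degM (act degB Delta phi beta)) \<and>
     (\<forall>n m phi beta. hom_homog degB degM n phi \<longrightarrow> dual_homog degB m beta
        \<longrightarrow> hom_homog degB degM (n + m) (act degB Delta phi beta)) \<and>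
     (\<forall>(phi :: 'b \<Rightarrow> ('m \<Rightarrow>\<^sub>0 'k)) psi beta. act degB Delta (phi + psi) beta = act degB Delta phi beta + act degB Delta psi beta) \<and>
     (\<forall>(phi :: 'b \<Rightarrow> ('m \<Rightarrow>\<^sub>0 'k)) beta gamma. act degB Delta phi (beta + gamma) = act degB Delta phi beta + act degB Delta phi gamma) \<and>
     (\<forall>c (phi :: 'b \<Rightarrow> ('m \<Rightarrow>\<^sub>0 'k)) beta. act degB Delta (hsc c phi) beta = hsc c (act degB Delta phi beta)) \<and>
     (\<forall>c (phi :: 'b \<Rightarrow> ('m \<Rightarrow>\<^sub>0 'k)) beta. act degB Delta phi (\<lambda>j. c * beta j) = hsc c (act degB Delta phi beta)) \<and>
     (\<forall>phi beta gamma. hom_gr degB degM phi \<longrightarrow> dual_el degB beta \<longrightarrow> dual_el degB gamma \<longrightarrow>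
        act degB Delta (act degB Delta phi beta) gamma = act degB Delta phi (dual_mult degB Delta beta gamma)) \<and>
     (\<forall>phi. hom_gr degB degM phi \<longrightarrow> act degB Delta phi eps = phi) \<and>
     \<comment> \<open>Leibniz rule\<close>
     (\<forall>n phi beta. hom_homog degB degM n phi \<longrightarrow> dual_el degB beta \<longrightarrow>
        D (act degB Delta phi beta)
          = act degB Delta (D phi) beta + hsc (ksign n) (act degB Delta phi (dual_d degB d beta)))"

end

theory Submission
  imports Defs
begin


lemma lookup_sc[simp]: "Poly_Mapping.lookup (sc c v) x = c * Poly_Mapping.lookup v x"
  by (simp add: sc_def Poly_Mapping.map.rep_eq when_def)

lemma keys_sc: "Poly_Mapping.keys (sc c v) \<subseteq> Poly_Mapping.keys v"
  by (auto simp: in_keys_iff)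

lemma lookup_lin: "Poly_Mapping.lookup (lin f v) x = (\<Sum>a\<in>Poly_Mapping.keys v. Poly_Mapping.lookup v a * Poly_Mapping.lookup (f a) x)"
  by (simp add: lin_def lookup_sum)

lemma lookup_lin_sup:
  assumes "finite S" "Poly_Mapping.keys v \<subseteq> S"
  shows "Poly_Mapping.lookup (lin f v) x = (\<Sum>a\<in>S. Poly_Mapping.lookup v a * Poly_Mapping.lookup (f a) x)"
  unfolding lookup_lin
  by (rule sum.mono_neutral_left) (use assms in \<open>auto simp: in_keys_iff\<close>)

lemma lin_add: "lin f (v + w) = lin f v + lin f w"
proof (rule poly_mapping_eqI)
  fix x
  let ?S = "Poly_Mapping.keys v \<union> Poly_Mapping.keys w"
  have "Poly_Mapping.keys (v + w) \<subseteq> ?S" by (rule keys_add)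
  then show "Poly_Mapping.lookup (lin f (v + w)) x = Poly_Mapping.lookup (lin f v + lin f w) x"
    by (simp add: lookup_add lookup_lin_sup[of ?S] sum.distrib algebra_simps)
qed

lemma lin_sc: "lin f (sc c v) = sc c (lin f v)"
proof (rule poly_mapping_eqI)
  fix x
  show "Poly_Mapping.lookup (lin f (sc c v)) x = Poly_Mapping.lookup (sc c (lin f v)) x"
    using keys_sc[of c v]
    by (simp add: lookup_lin_sup[of "Poly_Mapping.keys v"] sum_distrib_left algebra_simps)
qed

lemma lin_zero[simp]: "lin f 0 = 0"
  by (simp add: lin_def)

lemma lin_uminus: "lin f (- v) = - lin f v"
  by (rule poly_mapping_eqI) (simp add: lookup_lin sum_negf)

lemma lin_minus: "lin f (v - w) = lin f v - lin f w"
  by (metis diff_conv_add_uminus lin_add lin_uminus)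

lemma lin_fadd: "lin (\<lambda>a. f a + g a) v = lin f v + lin g v"
  by (rule poly_mapping_eqI) (simp add: lookup_lin lookup_add sum.distrib algebra_simps)

lemma lin_fsc: "lin (\<lambda>a. sc c (f a)) v = sc c (lin f v)"
  by (rule poly_mapping_eqI) (simp add: lookup_lin sum_distrib_left algebra_simps)

lemma sc_lin: "sc c (lin f v) = lin (\<lambda>a. sc c (f a)) v"
  by (simp add: lin_fsc)

lemma lin_fzero[simp]: "lin (\<lambda>a. 0) v = 0"
  by (rule poly_mapping_eqI) (simp add: lookup_lin)

lemma lin_fminus: "lin (\<lambda>a. f a - g a) v = lin f v - lin g v"
  by (rule poly_mapping_eqI) (simp add: lookup_lin lookup_minus sum_subtractf algebra_simps)

lemma lin_fuminus: "lin (\<lambda>a. - f a) v = - lin f v"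
  by (rule poly_mapping_eqI) (simp add: lookup_lin sum_negf)

lemma lin_bvec[simp]: "lin f (bvec a) = f a"
  by (simp add: lin_def bvec_def sc_def Poly_Mapping.map.rep_eq poly_mapping_eqI when_def lookup_single)

lemma lin_id[simp]: "lin bvec v = v"
proof (rule poly_mapping_eqI)
  fix x
  have "(\<Sum>a\<in>Poly_Mapping.keys v. Poly_Mapping.lookup v a * Poly_Mapping.lookup (bvec a) x) = (\<Sum>a\<in>Poly_Mapping.keys v. if a = x then Poly_Mapping.lookup v x else 0)"
    by (rule sum.cong) (auto simp: bvec_def lookup_single when_def)
  also have "\<dots> = Poly_Mapping.lookup v x" by (simp add: in_keys_iff)
  finally show "Poly_Mapping.lookup (lin bvec v) x = Poly_Mapping.lookup v x" by (simp add: lookup_lin)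
qed

lemma lin_id': "lin (\<lambda>x. bvec x) v = v"
  using lin_id by (metis eta_contract_eq)

lemma lin_cong: "(\<And>a. a \<in> Poly_Mapping.keys v \<Longrightarrow> f a = g a) \<Longrightarrow> lin f v = lin g v"
  by (simp add: lin_def)

lemma lin_comp: "lin g (lin f v) = lin (\<lambda>a. lin g (f a)) v"
proof (rule poly_mapping_eqI)
  fix y
  let ?S = "\<Union>a\<in>Poly_Mapping.keys v. Poly_Mapping.keys (f a)"
  have fin: "finite ?S" by simp
  have sub: "Poly_Mapping.keys (lin f v) \<subseteq> ?S"
  proof
    fix b assume "b \<in> Poly_Mapping.keys (lin f v)"
    then have "(\<Sum>a\<in>Poly_Mapping.keys v. Poly_Mapping.lookup v a * Poly_Mapping.lookup (f a) b) \<noteq> 0" by (simp add: in_keys_iff lookup_lin)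
    then obtain a where "a \<in> Poly_Mapping.keys v" "Poly_Mapping.lookup v a * Poly_Mapping.lookup (f a) b \<noteq> 0"
      by (meson sum.neutral)
    then show "b \<in> ?S" by (auto simp: in_keys_iff)
  qed
  have "Poly_Mapping.lookup (lin g (lin f v)) y = (\<Sum>b\<in>?S. (\<Sum>a\<in>Poly_Mapping.keys v. Poly_Mapping.lookup v a * Poly_Mapping.lookup (f a) b) * Poly_Mapping.lookup (g b) y)"
    by (subst lookup_lin_sup[OF fin sub]) (simp add: lookup_lin)
  also have "\<dots> = (\<Sum>a\<in>Poly_Mapping.keys v. Poly_Mapping.lookup v a * (\<Sum>b\<in>?S. Poly_Mapping.lookup (f a) b * Poly_Mapping.lookup (g b) y))"
    by (simp add: sum_distrib_left sum_distrib_right sum.swap[of _ ?S] algebra_simps)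
  also have "\<dots> = (\<Sum>a\<in>Poly_Mapping.keys v. Poly_Mapping.lookup v a * Poly_Mapping.lookup (lin g (f a)) y)"
    by (rule sum.cong[OF refl], subst lookup_lin_sup[OF fin]) auto
  also have "\<dots> = Poly_Mapping.lookup (lin (\<lambda>a. lin g (f a)) v) y"
    by (simp only: lookup_lin[of "\<lambda>a. lin g (f a)"])
  finally show "Poly_Mapping.lookup (lin g (lin f v)) y = Poly_Mapping.lookup (lin (\<lambda>a. lin g (f a)) v) y" .
qed

lemma lin_sum: "lin f (\<Sum>i\<in>I. v i) = (\<Sum>i\<in>I. lin f (v i))"
  by (induction I rule: infinite_finite_induct) (auto simp: lin_add)

lemma lin_fsum: "lin (\<lambda>a. \<Sum>i\<in>I. F i a) v = (\<Sum>i\<in>I. lin (F i) v)"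
  by (induction I rule: infinite_finite_induct) (auto simp: lin_fadd)

lemma sc_add: "sc c (v + w) = sc c v + sc c w"
  by (rule poly_mapping_eqI) (simp add: lookup_add algebra_simps)
lemma sc_minus: "sc c (v - w) = sc c v - sc c w"
  by (rule poly_mapping_eqI) (simp add: lookup_minus algebra_simps)
lemma sc_uminus: "sc c (- v) = - sc c v"
  by (rule poly_mapping_eqI) simp
lemma sc_sc[simp]: "sc c (sc c' v) = sc (c * c') v"
  by (rule poly_mapping_eqI) simp
lemma sc_one[simp]: "sc 1 v = v"
  by (rule poly_mapping_eqI) simp
lemma sc_zero[simp]: "sc 0 v = 0" "sc c 0 = 0"
  by (rule poly_mapping_eqI, simp)+
lemma sc_neg1: "sc (-1) v = - v"
  by (rule poly_mapping_eqI) simp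
lemma sc_addc: "sc (a + b) v = sc a v + sc b v"
  by (rule poly_mapping_eqI) (simp add: lookup_add algebra_simps)
lemma sc_sum: "sc c (\<Sum>i\<in>I. v i) = (\<Sum>i\<in>I. sc c (v i))"
  by (induction I rule: infinite_finite_induct) (auto simp: sc_add)

lemma sc_lfun: "sc (lfun g w) v = lin (\<lambda>x. sc (g x) v) w"
  by (rule poly_mapping_eqI) (simp add: lfun_def lookup_lin sum_distrib_right sum_distrib_left algebra_simps)

lemma lin_ltens: "lin g (ltens p w) = lin (\<lambda>z. g (p, z)) w"
  by (simp add: ltens_def lin_comp)
lemma lin_rtens: "lin g (rtens w q) = lin (\<lambda>z. g (z, q)) w"
  by (simp add: rtens_def lin_comp)


lemma lin_swap: "lin (\<lambda>a. lin (\<lambda>b. H a b) w) v = lin (\<lambda>b. lin (\<lambda>a. H a b) v) w"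
  by (rule poly_mapping_eqI)
     (simp add: lookup_lin sum_distrib_left sum_distrib_right sum.swap[of _ "Poly_Mapping.keys v"] algebra_simps)

lemma lin_cong2: "(\<And>p q. (p, q) \<in> Poly_Mapping.keys v \<Longrightarrow> f (p, q) = g (p, q)) \<Longrightarrow> lin f v = lin g v"
  by (rule lin_cong) auto

lemma ltens_lin: "ltens p (lin f w) = lin (\<lambda>z. ltens p (f z)) w"
  by (simp add: ltens_def lin_comp)
lemma ltens_add: "ltens p (v + w) = ltens p v + ltens p w"
  by (simp add: ltens_def lin_add)
lemma ltens_minus: "ltens p (v - w) = ltens p v - ltens p w"
  by (simp add: ltens_def lin_minus)
lemma ltens_sc: "ltens p (sc c w) = sc c (ltens p w)"
  by (simp add: ltens_def lin_sc)
lemma ltens_zero[simp]: "ltens p 0 = 0"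
  by (simp add: ltens_def)

lemma ksign_add: "ksign (a + b) = (ksign a * ksign b :: 'k::field)"
  by (auto simp: ksign_def)
lemma ksign_0[simp]: "ksign 0 = 1"
  by (simp add: ksign_def)
lemma ksign_sq[simp]: "ksign a * ksign a = (1::'k::field)"
  by (simp add: ksign_def)
lemma ksign_sq2[simp]: "ksign a * (ksign a * x) = (x::'k::field)"
  by (simp add: ksign_def)
lemma ksign_mult_plus1: "ksign (a * (b + 1)) = (ksign (a * b) * ksign a :: 'k::field)"
  by (simp add: distrib_left ksign_add)
lemma ksign_mult_plus1': "ksign ((b + 1) * a) = (ksign (b * a) * ksign a :: 'k::field)"
  by (simp add: distrib_right ksign_add)
lemma ksign_cong: "even (a - b) \<Longrightarrow> ksign a = ksign b"
  by (auto simp: ksign_def)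
lemma ksign_ne0[simp]: "ksign a \<noteq> (0::'k::field)"
  by (simp add: ksign_def)
lemma ksign_plus1: "ksign (a + 1) = - (ksign a :: 'k::field)"
  by (simp add: ksign_def)




locale DGC =
  fixes degB :: "'b \<Rightarrow> int"
    and Delta :: "'b \<Rightarrow> ('b \<times> 'b \<Rightarrow>\<^sub>0 'k::field)"
    and eps :: "'b \<Rightarrow> 'k"
    and d :: "'b \<Rightarrow> ('b \<Rightarrow>\<^sub>0 'k)"
  assumes B: "dg_coalgebra degB Delta eps d"
begin

lemma deg_Delta: "(p, q) \<in> Poly_Mapping.keys (Delta j) \<Longrightarrow> degB p + degB q = degB j"
  using B unfolding dg_coalgebra_def by fast
lemma deg_eps: "eps j \<noteq> 0 \<Longrightarrow> degB j = 0"
  using B unfolding dg_coalgebra_def by fast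
lemma deg_d: "p \<in> Poly_Mapping.keys (d j) \<Longrightarrow> degB p = degB j + 1"
  using B unfolding dg_coalgebra_def by fast
lemma dd: "lin d (d j) = 0"
  using B unfolding dg_coalgebra_def by fast

lemma coassoc:
  "lin (\<lambda>(p, q). lin (\<lambda>(a, b). H (a, b, q)) (Delta p)) (Delta j)
   = lin (\<lambda>(a, r). lin (\<lambda>(b, c). H (a, b, c)) (Delta r)) (Delta j)"
proof -
  have ax: "lin (\<lambda>(p, q). lin (\<lambda>(a, b). bvec (a, (b, q))) (Delta p)) (Delta j)
          = lin (\<lambda>(p, q). ltens p (Delta q)) (Delta j)"
    using B unfolding dg_coalgebra_def by blast
  have "lin H (lin (\<lambda>(p, q). lin (\<lambda>(a, b). bvec (a, (b, q))) (Delta p)) (Delta j))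
      = lin H (lin (\<lambda>(p, q). ltens p (Delta q)) (Delta j))" using ax by simp
  then show ?thesis
    by (simp add: lin_comp lin_ltens case_prod_unfold)
qed

lemma counit1: "lin (\<lambda>(p, q). sc (eps p) (F q)) (Delta j) = F j"
proof -
  have ax: "lin (\<lambda>(p, q). sc (eps p) (bvec q)) (Delta j) = bvec j"
    using B unfolding dg_coalgebra_def by blast
  have "lin F (lin (\<lambda>(p, q). sc (eps p) (bvec q)) (Delta j)) = lin F (bvec j)" using ax by simp
  then show ?thesis by (simp add: lin_comp lin_sc case_prod_unfold)
qed

lemma counit2: "lin (\<lambda>(p, q). sc (eps q) (F p)) (Delta j) = F j"
proof -
  have ax: "lin (\<lambda>(p, q). sc (eps q) (bvec p)) (Delta j) = bvec j"
    using B unfolding dg_coalgebra_def by blast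
  have "lin F (lin (\<lambda>(p, q). sc (eps q) (bvec p)) (Delta j)) = lin F (bvec j)" using ax by simp
  then show ?thesis by (simp add: lin_comp lin_sc case_prod_unfold)
qed

lemma coder:
  "lin (\<lambda>i. lin G (Delta i)) (d j)
   = lin (\<lambda>(p, q). lin (\<lambda>p'. G (p', q)) (d p) + sc (ksign (degB p)) (lin (\<lambda>q'. G (p, q')) (d q))) (Delta j)"
proof -
  have ax: "lin Delta (d j) = lin (\<lambda>(p, q). rtens (d p) q + sc (ksign (degB p)) (ltens p (d q))) (Delta j)"
    using B unfolding dg_coalgebra_def by blast
  have "lin G (lin Delta (d j)) = lin G (lin (\<lambda>(p, q). rtens (d p) q + sc (ksign (degB p)) (ltens p (d q))) (Delta j))"
    using ax by simp
  then show ?thesis by (simp add: lin_comp lin_sc lin_add lin_ltens lin_rtens case_prod_unfold)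
qed

end



context DGC
begin

definition Phi :: "int \<Rightarrow> ('b \<Rightarrow> ('m \<Rightarrow>\<^sub>0 'k)) \<Rightarrow> 'b \<Rightarrow> ('b \<times> 'm \<Rightarrow>\<^sub>0 'k)" where
  "Phi n phi j = lin (\<lambda>(p, q). sc (ksign (degB p * n)) (ltens p (phi q))) (Delta j)"

definition E :: "('b \<times> 'm \<Rightarrow>\<^sub>0 'k) \<Rightarrow> ('m \<Rightarrow>\<^sub>0 'k)" where
  "E w = lin (\<lambda>(p, z). sc (eps p) (bvec z)) w"

definition comodc :: "int \<Rightarrow> ('b \<Rightarrow> ('b \<times> 'm \<Rightarrow>\<^sub>0 'k)) \<Rightarrow> bool" where
  "comodc n G \<longleftrightarrow> (\<forall>j. lin (coact Delta) (G j) = lin (\<lambda>(p, q). sc (ksign (n * degB p)) (ltens p (G q))) (Delta j))"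

lemma E_ltens: "E (ltens p w) = sc (eps p) w"
  by (simp add: E_def lin_ltens lin_fsc)

lemma E_lin: "E (lin f v) = lin (\<lambda>a. E (f a)) v"
  by (simp add: E_def lin_comp)
lemma E_add: "E (v + w) = E v + E w" by (simp add: E_def lin_add)
lemma E_minus: "E (v - w) = E v - E w" by (simp add: E_def lin_minus)
lemma E_uminus: "E (- v) = - E v" by (simp add: E_def lin_uminus)
lemma E_sc: "E (sc c w) = sc c (E w)" by (simp add: E_def lin_sc)

lemma comp_E: "comp eps f = (\<lambda>y. E (f y))"
  by (simp add: comp_def E_def fun_eq_iff)

lemma E_Phi: "E (Phi n phi j) = phi j"
proof -
  have "E (Phi n phi j) = lin (\<lambda>(p, q). sc (ksign (degB p * n)) (sc (eps p) (phi q))) (Delta j)"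
    by (simp add: Phi_def E_lin E_sc E_ltens case_prod_unfold del: sc_sc)
  also have "\<dots> = lin (\<lambda>(p, q). sc (eps p) (phi q)) (Delta j)"
  proof (rule lin_cong2)
    fix p q show "(case (p, q) of (p, q) \<Rightarrow> sc (ksign (degB p * n)) (sc (eps p) (phi q))) =
      (case (p, q) of (p, q) \<Rightarrow> sc (eps p) (phi q))"
      by (cases "eps p = 0") (auto dest: deg_eps)
  qed
  finally show ?thesis by (simp add: counit1)
qed

definition T :: "('b \<times> ('b \<times> 'm) \<Rightarrow>\<^sub>0 'k) \<Rightarrow> ('b \<times> 'm \<Rightarrow>\<^sub>0 'k)" where
  "T w = lin (\<lambda>(a, b, x). sc (eps b) (bvec (a, x))) w"

lemma T_lin: "T (lin f v) = lin (\<lambda>a. T (f a)) v"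
  by (simp add: T_def lin_comp)
lemma T_sc: "T (sc c w) = sc c (T w)" by (simp add: T_def lin_sc)

lemma T_coact: "T (coact Delta y) = bvec y"
proof (cases y)
  case (Pair i x)
  have "T (coact Delta (i, x)) = lin (\<lambda>(p, q). sc (eps q) (bvec (p, x))) (Delta i)"
    by (simp add: T_def coact_def lin_comp case_prod_unfold)
  also have "\<dots> = bvec (i, x)" by (rule counit2)
  finally show ?thesis using Pair by simp
qed

lemma T_ltens: "T (ltens p w) = ltens p (E w)"
  by (simp add: T_def E_def lin_ltens ltens_lin lin_fsc ltens_sc case_prod_unfold)
     (simp add: ltens_def)

lemma comodc_Phi_eq:
  assumes "comodc n G"
  shows "G j = Phi n (\<lambda>i. E (G i)) j"
proof -
  have "T (lin (coact Delta) (G j)) = lin (\<lambda>y. T (coact Delta y)) (G j)"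
    by (simp add: T_def lin_comp)
  also have "\<dots> = G j" by (simp add: T_coact)
  finally have 1: "T (lin (coact Delta) (G j)) = G j" .
  have "T (lin (\<lambda>(p, q). sc (ksign (n * degB p)) (ltens p (G q))) (Delta j))
        = Phi n (\<lambda>i. E (G i)) j"
    by (simp add: Phi_def T_lin T_sc T_ltens case_prod_unfold mult.commute)
  with 1 assms show ?thesis unfolding comodc_def by metis
qed


lemma coact_ltens: "lin (coact Delta) (ltens p w) = lin (\<lambda>(a, b). ltens a (ltens b w)) (Delta p)"
proof -
  have "lin (coact Delta) (ltens p w) = lin (\<lambda>z. lin (\<lambda>(a, b). bvec (a, (b, z))) (Delta p)) w"
    by (simp add: lin_ltens coact_def)
  also have "\<dots> = lin (\<lambda>(a, b). lin (\<lambda>z. bvec (a, (b, z))) w) (Delta p)"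
    by (simp add: case_prod_unfold lin_swap[where H = "\<lambda>z x. bvec (fst x, snd x, z)"])
  also have "\<dots> = lin (\<lambda>(a, b). ltens a (ltens b w)) (Delta p)"
    by (simp add: ltens_def lin_comp)
  finally show ?thesis .
qed

lemma comodc_Phi: "comodc n (Phi n phi)"
  unfolding comodc_def
proof
  fix j
  let ?M = "lin (\<lambda>(a, r). lin (\<lambda>(b, c). sc (ksign (degB a * n) * ksign (degB b * n)) (ltens a (ltens b (phi c)))) (Delta r)) (Delta j)"
  have "lin (coact Delta) (Phi n phi j)
      = lin (\<lambda>(p, q). lin (\<lambda>(a, b). sc (ksign (degB p * n)) (ltens a (ltens b (phi q)))) (Delta p)) (Delta j)"
    by (simp add: Phi_def lin_comp lin_sc coact_ltens case_prod_unfold lin_fsc)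
  also have "\<dots> = lin (\<lambda>(p, q). lin (\<lambda>(a, b). sc (ksign (degB a * n) * ksign (degB b * n)) (ltens a (ltens b (phi q)))) (Delta p)) (Delta j)"
  proof (rule lin_cong2, simp, rule lin_cong2, simp)
    fix p q a b assume "(a, b) \<in> Poly_Mapping.keys (Delta p)"
    then have "degB p = degB a + degB b" using deg_Delta by simp
    then show "sc (ksign (degB p * n)) (ltens a (ltens b (phi q))) =
         sc (ksign (degB a * n) * ksign (degB b * n)) (ltens a (ltens b (phi q)))"
      by (simp add: distrib_right ksign_add)
  qed
  also have "\<dots> = ?M"
    using coassoc[of "\<lambda>(a, b, c). sc (ksign (degB a * n) * ksign (degB b * n)) (ltens a (ltens b (phi c)))" j]
    by simp
  also have "\<dots> = lin (\<lambda>(p, q). sc (ksign (n * degB p)) (ltens p (Phi n phi q))) (Delta j)"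
    by (simp add: Phi_def ltens_lin ltens_sc sc_lin case_prod_unfold mult.commute)
  finally show "lin (coact Delta) (Phi n phi j) = lin (\<lambda>(p, q). sc (ksign (n * degB p)) (ltens p (Phi n phi q))) (Delta j)" .
qed


lemma comodc_comp:
  assumes f: "comod_hom degB Delta degM degN m f" and G: "comodc n G"
  shows "comodc (n + m) (\<lambda>j. lin f (G j))"
  unfolding comodc_def
proof
  fix j
  have fc: "\<And>y. lin (coact Delta) (f y) = lin (\<lambda>(p, z). sc (ksign (m * degB p)) (ltens p (f z))) (coact Delta y)"
    using f unfolding comod_hom_def by blast
  have "lin (coact Delta) (lin f (G j)) = lin (\<lambda>y. lin (coact Delta) (f y)) (G j)"
    by (simp add: lin_comp)
  also have "\<dots> = lin (\<lambda>(p, z). sc (ksign (m * degB p)) (ltens p (f z))) (lin (coact Delta) (G j))"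
    by (simp add: fc lin_comp)
  also have "\<dots> = lin (\<lambda>(p, q). sc (ksign (n * degB p)) (lin (\<lambda>z. sc (ksign (m * degB p)) (ltens p (f z))) (G q))) (Delta j)"
    using G unfolding comodc_def by (simp add: lin_comp lin_sc lin_ltens case_prod_unfold)
  also have "\<dots> = lin (\<lambda>(p, q). sc (ksign ((n + m) * degB p)) (ltens p (lin f (G q)))) (Delta j)"
    by (simp add: ltens_lin sc_lin distrib_right ksign_add case_prod_unfold)
  finally show "lin (coact Delta) (lin f (G j)) = lin (\<lambda>(p, q). sc (ksign ((n + m) * degB p)) (ltens p (lin f (G q)))) (Delta j)" .
qed

lemma rtens_ltens_swap: "lin (\<lambda>z. rtens v z) w = lin (\<lambda>p'. ltens p' w) v"
  by (simp add: rtens_def ltens_def lin_swap[where H = "\<lambda>z p'. bvec (p', z)"])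

lemma comodc_dcomm:
  assumes M: "free_dg_comodule degB Delta d degM dM" and G: "comodc n G"
  shows "comodc (n + 1) (\<lambda>j. lin dM (G j) - sc (ksign n) (lin G (d j)))"
  unfolding comodc_def
proof
  fix j
  have Mc: "\<And>y. lin (coact Delta) (dM y) = lin (\<lambda>(p, z). rtens (d p) z + sc (ksign (degB p)) (ltens p (dM z))) (coact Delta y)"
    using M unfolding free_dg_comodule_def by blast
  have Gc: "\<And>j. lin (coact Delta) (G j) = lin (\<lambda>(p, q). sc (ksign (n * degB p)) (ltens p (G q))) (Delta j)"
    using G unfolding comodc_def by blast
  have A1: "lin (coact Delta) (lin dM (G j)) = lin (\<lambda>(p, q). sc (ksign (n * degB p)) (lin (\<lambda>p'. ltens p' (G q)) (d p))
        + sc (ksign (n * degB p) * ksign (degB p)) (ltens p (lin dM (G q)))) (Delta j)"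
  proof -
    have "lin (coact Delta) (lin dM (G j)) = lin (\<lambda>y. lin (coact Delta) (dM y)) (G j)"
      by (simp add: lin_comp)
    also have "\<dots> = lin (\<lambda>(p, z). rtens (d p) z + sc (ksign (degB p)) (ltens p (dM z))) (lin (coact Delta) (G j))"
      by (simp add: Mc lin_comp)
    also have "\<dots> = lin (\<lambda>(p, q). sc (ksign (n * degB p)) (lin (\<lambda>z. rtens (d p) z) (G q))
        + sc (ksign (n * degB p) * ksign (degB p)) (ltens p (lin dM (G q)))) (Delta j)"
      by (simp add: Gc lin_comp lin_sc lin_ltens case_prod_unfold lin_fadd sc_add lin_fsc ltens_lin)
    finally show ?thesis by (simp add: rtens_ltens_swap)
  qed
  have A2: "lin (coact Delta) (lin G (d j)) = lin (\<lambda>(p, q). sc (ksign (n * degB p) * ksign n) (lin (\<lambda>p'. ltens p' (G q)) (d p))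
        + sc (ksign (degB p) * ksign (n * degB p)) (ltens p (lin G (d q)))) (Delta j)"
  proof -
    have "lin (coact Delta) (lin G (d j)) = lin (\<lambda>i. lin (\<lambda>(p, q). sc (ksign (n * degB p)) (ltens p (G q))) (Delta i)) (d j)"
      by (simp add: lin_comp Gc)
    also have "\<dots> = lin (\<lambda>(p, q). lin (\<lambda>p'. sc (ksign (n * degB p')) (ltens p' (G q))) (d p)
        + sc (ksign (degB p)) (lin (\<lambda>q'. sc (ksign (n * degB p)) (ltens p (G q'))) (d q))) (Delta j)"
      by (simp add: coder case_prod_unfold)
    also have "\<dots> = lin (\<lambda>(p, q). lin (\<lambda>p'. sc (ksign (n * degB p) * ksign n) (ltens p' (G q))) (d p)
        + sc (ksign (degB p)) (lin (\<lambda>q'. sc (ksign (n * degB p)) (ltens p (G q'))) (d q))) (Delta j)"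
      apply (rule lin_cong2)
      apply (simp only: prod.case)
      apply (rule arg_cong2[where f = "(+)"])
       apply (rule lin_cong)
       apply (simp add: deg_d distrib_left ksign_add)
      apply (rule refl)
      done
    finally show ?thesis by (simp add: ltens_lin sc_lin mult_ac)
  qed
  show "lin (coact Delta) (lin dM (G j) - sc (ksign n) (lin G (d j))) =
         lin (\<lambda>(p, q). sc (ksign ((n + 1) * degB p)) (ltens p (lin dM (G q) - sc (ksign n) (lin G (d q))))) (Delta j)"
    apply (simp add: lin_minus lin_sc A1 A2)
    apply (simp only: sc_lin lin_fminus[symmetric])
    apply (rule lin_cong2)
    apply (simp add: sc_add sc_minus ltens_minus ltens_sc ksign_mult_plus1' sc_lin ltens_lin)
    apply (simp add: mult_ac)
    done
qed

end



context DGC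
begin

lemma comp_lin: "lin (comp eps f) w = E (lin f w)"
  by (simp add: comp_E E_lin)

lemma fvee_h_Phi: "fvee_h degB Delta eps f n phi j = E (lin f (Phi n phi j))"
  by (simp add: fvee_h_def Phi_def comp_lin lin_comp lin_sc E_lin E_sc case_prod_unfold)

lemma dvee_h_Phi: "dvee_h degB Delta eps d dM n phi j = E (lin dM (Phi n phi j)) - sc (ksign n) (lin phi (d j))"
  by (simp add: dvee_h_def Phi_def comp_lin lin_comp lin_sc E_lin E_sc case_prod_unfold)

lemma Phi_fvee:
  assumes f: "comod_hom degB Delta degM degN m f"
  shows "Phi (n + m) (fvee_h degB Delta eps f n phi) = (\<lambda>j. lin f (Phi n phi j))"
proof
  fix j
  have "comodc (n + m) (\<lambda>j. lin f (Phi n phi j))"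
    by (rule comodc_comp[OF f comodc_Phi])
  from comodc_Phi_eq[OF this, of j]
  show "Phi (n + m) (fvee_h degB Delta eps f n phi) j = lin f (Phi n phi j)"
    by (simp add: fvee_h_Phi[abs_def])
qed

lemma E_lin_Phi_d: "E (lin (Phi n phi) (d j)) = lin phi (d j)"
  by (simp add: E_lin E_Phi)

lemma Phi_dvee:
  assumes M: "free_dg_comodule degB Delta d degM dM"
  shows "Phi (n + 1) (dvee_h degB Delta eps d dM n phi)
       = (\<lambda>j. lin dM (Phi n phi j) - sc (ksign n) (lin (Phi n phi) (d j)))"
proof
  fix j
  have "comodc (n + 1) (\<lambda>j. lin dM (Phi n phi j) - sc (ksign n) (lin (Phi n phi) (d j)))"
    by (rule comodc_dcomm[OF M comodc_Phi])
  from comodc_Phi_eq[OF this, of j]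
  show "Phi (n + 1) (dvee_h degB Delta eps d dM n phi) j = lin dM (Phi n phi j) - sc (ksign n) (lin (Phi n phi) (d j))"
    by (simp add: dvee_h_Phi[abs_def] E_minus E_sc E_lin_Phi_d)
qed

lemma dMdM: "free_dg_comodule degB Delta d degM dM \<Longrightarrow> lin dM (lin dM w) = 0"
proof -
  assume "free_dg_comodule degB Delta d degM dM"
  then have "\<forall>y. lin dM (dM y) = 0" unfolding free_dg_comodule_def by blast
  then have "(\<lambda>y. lin dM (dM y)) = (\<lambda>y. 0)" by auto
  then show ?thesis by (simp add: lin_comp)
qed

lemma dvee_dvee:
  assumes M: "free_dg_comodule degB Delta d degM dM"
  shows "dvee_h degB Delta eps d dM (n + 1) (dvee_h degB Delta eps d dM n phi) = (\<lambda>j. 0)"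
proof
  fix j
  let ?P = "Phi n phi"
  let ?X = "E (lin dM (lin ?P (d j)))"
  have 1: "E (lin dM (Phi (n + 1) (dvee_h degB Delta eps d dM n phi) j)) = - sc (ksign n) ?X"
    by (simp add: Phi_dvee[OF M] lin_minus lin_sc dMdM[OF M] E_sc E_uminus)
  have "lin (dvee_h degB Delta eps d dM n phi) (d j)
      = lin (\<lambda>i. E (lin dM (?P i)) - sc (ksign n) (lin phi (d i))) (d j)"
    by (rule arg_cong[where f = "\<lambda>g. lin g (d j)"]) (simp add: fun_eq_iff dvee_h_Phi)
  also have "\<dots> = ?X - sc (ksign n) (lin phi (lin d (d j)))"
    by (simp add: lin_fminus lin_fsc E_lin lin_comp)
  also have "\<dots> = ?X" by (simp add: dd)
  finally have 2: "lin (dvee_h degB Delta eps d dM n phi) (d j) = ?X" .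
  show "dvee_h degB Delta eps d dM (n + 1) (dvee_h degB Delta eps d dM n phi) j = 0"
    by (simp add: dvee_h_Phi[of _ "n + 1"] 1 2 ksign_plus1 sc_neg1[symmetric])
qed


lemma fvee_comp_h:
  assumes f: "comod_hom degB Delta degM degN n f"
  shows "fvee_h degB Delta eps (\<lambda>y. lin g (f y)) k phi = fvee_h degB Delta eps g (k + n) (fvee_h degB Delta eps f k phi)"
  by (simp add: fun_eq_iff fvee_h_Phi Phi_fvee[OF f] lin_comp)

lemma fvee_id_h: "fvee_h degB Delta eps bvec k phi = phi"
  by (simp add: fun_eq_iff fvee_h_Phi E_Phi)

end



context DGC
begin

definition homv :: "('m \<Rightarrow> int) \<Rightarrow> int \<Rightarrow> ('m \<Rightarrow>\<^sub>0 'k) \<Rightarrow> bool" where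
  "homv D e w \<longleftrightarrow> (\<forall>x\<in>Poly_Mapping.keys w. D x = e)"

lemma homv_zero[simp]: "homv D e 0"
  by (simp add: homv_def)

lemma hom_homog_homv: "hom_homog degB degM n phi \<longleftrightarrow> (\<forall>j. homv degM (degB j + n) (phi j))"
  by (simp add: hom_homog_def homv_def)

lemma homv_sc: "homv D e w \<Longrightarrow> homv D e (sc c w)"
  unfolding homv_def by (auto simp: in_keys_iff)
lemma homv_add: "homv D e v \<Longrightarrow> homv D e w \<Longrightarrow> homv D e (v + w)"
  unfolding homv_def by (auto simp: in_keys_iff lookup_add)
lemma homv_minus: "homv D e v \<Longrightarrow> homv D e w \<Longrightarrow> homv D e (v - w)"
  unfolding homv_def by (auto simp: in_keys_iff lookup_minus)
lemma homv_bvec: "homv D (D x) (bvec x)"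
  by (simp add: homv_def bvec_def)

lemma homv_sum: "(\<And>i. i \<in> I \<Longrightarrow> homv D e (F i)) \<Longrightarrow> homv D e (sum F I)"
proof (induction I rule: infinite_finite_induct)
  case (insert x F)
  then show ?case by (simp add: homv_add)
qed simp_all

lemma homv_lin: "(\<And>a. a \<in> Poly_Mapping.keys v \<Longrightarrow> homv D e (f a)) \<Longrightarrow> homv D e (lin f v)"
  unfolding lin_def by (rule homv_sum) (simp add: homv_sc)

lemma fvee_d_h:
  assumes f: "comod_hom degB Delta degM degN n f"
    and M: "free_dg_comodule degB Delta d degM dM"
  shows "fvee_h degB Delta eps (\<lambda>y. lin dN (f y) - sc (ksign n) (lin f (dM y))) k phi
       = (\<lambda>j. dvee_h degB Delta eps d dN (k + n) (fvee_h degB Delta eps f k phi) j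
          - sc (ksign n) (fvee_h degB Delta eps f (k + 1) (dvee_h degB Delta eps d dM k phi) j))"
proof
  fix j
  let ?P = "Phi k phi"
  have 1: "lin (fvee_h degB Delta eps f k phi) (d j) = E (lin f (lin ?P (d j)))"
  proof -
    have "lin (fvee_h degB Delta eps f k phi) (d j) = lin (\<lambda>i. E (lin f (?P i))) (d j)"
      by (rule arg_cong[where f = "\<lambda>g. lin g (d j)"]) (simp add: fun_eq_iff fvee_h_Phi)
    then show ?thesis by (simp add: E_lin lin_comp)
  qed
  show "fvee_h degB Delta eps (\<lambda>y. lin dN (f y) - sc (ksign n) (lin f (dM y))) k phi j
       = dvee_h degB Delta eps d dN (k + n) (fvee_h degB Delta eps f k phi) j
          - sc (ksign n) (fvee_h degB Delta eps f (k + 1) (dvee_h degB Delta eps d dM k phi) j)"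
    apply (simp add: fvee_h_Phi dvee_h_Phi[of _ "k + n"] Phi_fvee[OF f] Phi_dvee[OF M] 1)
    apply (simp add: lin_fminus lin_fsc lin_minus lin_sc E_minus E_sc sc_minus ksign_add lin_comp mult.commute)
    done
qed


lemma homv_compf:
  assumes deg: "\<forall>y. \<forall>z\<in>Poly_Mapping.keys (f y). tdeg degB degN z = tdeg degB degM y + n"
    and w: "homv degM e w"
  shows "homv degN (degB p + e + n) (lin (comp eps f) (ltens p w))"
  unfolding lin_ltens comp_def
proof (rule homv_lin, rule homv_lin)
  fix z pz assume z: "z \<in> Poly_Mapping.keys w" and pz: "pz \<in> Poly_Mapping.keys (f (p, z))"
  obtain p' z' where pz': "pz = (p', z')" by fastforce
  have 1: "degB p' + degN z' = degB p + degM z + n"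
    using deg pz pz' by (force simp: tdeg_def)
  have 2: "degM z = e" using w z by (simp add: homv_def)
  show "homv degN (degB p + e + n) ((\<lambda>(p, z). sc (eps p) (bvec z)) pz)"
  proof (cases "eps p' = 0")
    case True
    then show ?thesis using pz' by simp
  next
    case False
    then have "degB p' = 0" by (rule deg_eps)
    then have "degN z' = degB p + e + n" using 1 2 by simp
    then have "homv degN (degB p + e + n) (bvec z')" using homv_bvec[of degN z'] by simp
    then show ?thesis using pz' by (simp add: homv_sc)
  qed
qed

lemma homog_fvee_h:
  assumes deg: "\<forall>y. \<forall>z\<in>Poly_Mapping.keys (f y). tdeg degB degN z = tdeg degB degM y + n"
    and phi: "hom_homog degB degM k phi"
  shows "hom_homog degB degN (k + n) (fvee_h degB Delta eps f k phi)"
  unfolding hom_homog_homv fvee_h_def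
proof (intro allI homv_lin)
  fix j pq assume pq: "pq \<in> Poly_Mapping.keys (Delta j)"
  obtain p q where pq': "pq = (p, q)" by fastforce
  have "homv degN (degB p + (degB q + k) + n) (lin (comp eps f) (ltens p (phi q)))"
    by (rule homv_compf[OF deg]) (use phi in \<open>simp add: hom_homog_homv\<close>)
  moreover have "degB p + degB q = degB j" using deg_Delta pq pq' by simp
  ultimately have "homv degN (degB j + (k + n)) (lin (comp eps f) (ltens p (phi q)))"
    by (simp add: algebra_simps)
  then show "homv degN (degB j + (k + n)) ((\<lambda>(p, q). sc (ksign (degB p * k)) (lin (comp eps f) (ltens p (phi q)))) pq)"
    using pq' by (simp add: homv_sc)
qed

lemma homog_dvee_h:
  assumes M: "free_dg_comodule degB Delta d degM dM"
    and phi: "hom_homog degB degM k phi"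
  shows "hom_homog degB degM (k + 1) (dvee_h degB Delta eps d dM k phi)"
proof -
  have deg: "\<forall>y. \<forall>z\<in>Poly_Mapping.keys (dM y). tdeg degB degM z = tdeg degB degM y + 1"
    using M unfolding free_dg_comodule_def by blast
  have 1: "hom_homog degB degM (k + 1) (fvee_h degB Delta eps dM k phi)"
    by (rule homog_fvee_h[OF deg phi])
  have 2: "homv degM (degB j + (k + 1)) (lin phi (d j))" for j
  proof (rule homv_lin)
    fix a assume "a \<in> Poly_Mapping.keys (d j)"
    then have "degB a = degB j + 1" by (rule deg_d)
    moreover have "homv degM (degB a + k) (phi a)" using phi by (simp add: hom_homog_homv)
    ultimately show "homv degM (degB j + (k + 1)) (phi a)" by (simp add: algebra_simps)
  qed
  have 3: "dvee_h degB Delta eps d dM k phi j = fvee_h degB Delta eps dM k phi j - sc (ksign k) (lin phi (d j))" for j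
    by (simp add: dvee_h_def fvee_h_def)
  show ?thesis unfolding hom_homog_homv 3
  proof
    fix j
    show "homv degM (degB j + (k + 1)) (fvee_h degB Delta eps dM k phi j - sc (ksign k) (lin phi (d j)))"
      using 1 2[of j] by (simp add: hom_homog_homv homv_minus homv_sc)
  qed
qed

end



lemma sum_app: "(sum F I) j = sum (\<lambda>i. F i j) I"
  by (induction I rule: infinite_finite_induct) auto

lemma keys_lin_sub: "Poly_Mapping.keys (lin f v) \<subseteq> (\<Union>a\<in>Poly_Mapping.keys v. Poly_Mapping.keys (f a))"
proof
  fix b assume "b \<in> Poly_Mapping.keys (lin f v)"
  then have "(\<Sum>a\<in>Poly_Mapping.keys v. Poly_Mapping.lookup v a * Poly_Mapping.lookup (f a) b) \<noteq> 0"
    by (simp add: in_keys_iff lookup_lin)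
  then obtain a where "a \<in> Poly_Mapping.keys v" "Poly_Mapping.lookup v a * Poly_Mapping.lookup (f a) b \<noteq> 0"
    by (meson sum.neutral)
  then show "b \<in> (\<Union>a\<in>Poly_Mapping.keys v. Poly_Mapping.keys (f a))" by (auto simp: in_keys_iff)
qed

lemma keys_sum_sub: "Poly_Mapping.keys (sum F I) \<subseteq> (\<Union>i\<in>I. Poly_Mapping.keys (F i))"
proof (induction I rule: infinite_finite_induct)
  case (insert x F)
  then show ?case using keys_add by fastforce
qed auto

lemma hom_homog_hdegs: "hom_homog degB degM n phi \<Longrightarrow> hdegs degB degM phi \<subseteq> {n}"
  by (auto simp: hom_homog_def hdegs_def)

lemma hdegs_sum: "hdegs degB degM (sum F I) \<subseteq> (\<Union>i\<in>I. hdegs degB degM (F i))"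
proof
  fix t assume "t \<in> hdegs degB degM (sum F I)"
  then obtain j x where t: "t = degM x - degB j" and x: "x \<in> Poly_Mapping.keys (\<Sum>i\<in>I. F i j)"
    unfolding hdegs_def sum_app by blast
  from subsetD[OF keys_sum_sub x] obtain i where "i \<in> I" "x \<in> Poly_Mapping.keys (F i j)" by blast
  then show "t \<in> (\<Union>i\<in>I. hdegs degB degM (F i))" using t unfolding hdegs_def by blast
qed

lemma hom_gr_sum:
  assumes "finite I" "\<And>i. i \<in> I \<Longrightarrow> hom_homog degB degM (g i) (F i)"
  shows "hom_gr degB degM (sum F I)"
proof -
  have "hdegs degB degM (sum F I) \<subseteq> g ` I"
  proof
    fix t assume "t \<in> hdegs degB degM (sum F I)"
    then obtain i where i: "i \<in> I" "t \<in> hdegs degB degM (F i)" using hdegs_sum by blast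
    then show "t \<in> g ` I" using hom_homog_hdegs[OF assms(2)[OF i(1)]] by auto
  qed
  then show ?thesis unfolding hom_gr_def by (rule finite_subset) (simp add: assms(1))
qed

lemma hom_gr_homog: "hom_homog degB degM n phi \<Longrightarrow> hom_gr degB degM phi"
  unfolding hom_gr_def by (rule finite_subset[OF hom_homog_hdegs]) auto

lemma hpart_same: "hom_homog degB degM n phi \<Longrightarrow> hpart degB degM n phi = phi"
  unfolding hpart_def
proof
  fix j assume h: "hom_homog degB degM n phi"
  have "lin (\<lambda>x. if degM x = degB j + n then bvec x else 0) (phi j) = lin bvec (phi j)"
    by (rule lin_cong) (use h in \<open>auto simp: hom_homog_def\<close>)
  then show "lin (\<lambda>x. if degM x = degB j + n then bvec x else 0) (phi j) = phi j" by simp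
qed

lemma hpart_other: "hom_homog degB degM n phi \<Longrightarrow> m \<noteq> n \<Longrightarrow> hpart degB degM m phi = 0"
  unfolding hpart_def
proof
  fix j assume h: "hom_homog degB degM n phi" and mn: "m \<noteq> n"
  have "lin (\<lambda>x. if degM x = degB j + m then bvec x else 0) (phi j) = lin (\<lambda>x. 0) (phi j)"
    by (rule lin_cong) (use h mn in \<open>auto simp: hom_homog_def\<close>)
  then show "lin (\<lambda>x. if degM x = degB j + m then bvec x else 0) (phi j) = 0 j" by simp
qed

lemma hpart_notin: "m \<notin> hdegs degB degM phi \<Longrightarrow> hpart degB degM m phi = 0"
  unfolding hpart_def
proof
  fix j assume h: "m \<notin> hdegs degB degM phi"
  have "lin (\<lambda>x. if degM x = degB j + m then bvec x else 0) (phi j) = lin (\<lambda>x. 0) (phi j)"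
    by (rule lin_cong) (use h in \<open>auto simp: hdegs_def\<close>)
  then show "lin (\<lambda>x. if degM x = degB j + m then bvec x else 0) (phi j) = 0 j" by simp
qed

lemma hpart_homog:
  fixes phi :: "'b \<Rightarrow> ('m \<Rightarrow>\<^sub>0 'k::field)"
  shows "hom_homog degB degM n (hpart degB degM n phi)"
  unfolding hom_homog_def hpart_def
proof (intro allI ballI)
  fix j x assume x: "x \<in> Poly_Mapping.keys (lin (\<lambda>x. if degM x = degB j + n then bvec x else 0) (phi j))"
  have xx: "x \<in> (\<Union>a\<in>Poly_Mapping.keys (phi j). Poly_Mapping.keys (if degM a = degB j + n then (bvec a :: 'm \<Rightarrow>\<^sub>0 'k) else 0))"
    using subsetD[OF keys_lin_sub x] .
  obtain a where "x \<in> Poly_Mapping.keys (if degM a = degB j + n then (bvec a :: 'm \<Rightarrow>\<^sub>0 'k) else 0)"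
  proof (rule UN_E[OF xx])
    fix a assume "x \<in> Poly_Mapping.keys (if degM a = degB j + n then (bvec a :: 'm \<Rightarrow>\<^sub>0 'k) else 0)"
    then show thesis by (rule that)
  qed
  then show "degM x = degB j + n" by (auto simp: bvec_def split: if_splits)
qed

lemma hpart_sum: "hpart degB degM m (sum F I) = (\<Sum>i\<in>I. hpart degB degM m (F i))"
  by (rule ext) (simp add: hpart_def sum_app lin_sum)

lemma hpart_decomp:
  assumes "finite S" "hdegs degB degM phi \<subseteq> S"
  shows "phi = (\<Sum>n\<in>S. hpart degB degM n phi)"
proof
  fix j
  have "(\<Sum>n\<in>S. hpart degB degM n phi) j = lin (\<lambda>x. \<Sum>n\<in>S. if degM x = degB j + n then bvec x else 0) (phi j)"
    by (simp add: sum_app hpart_def lin_fsum)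
  also have "\<dots> = lin bvec (phi j)"
  proof (rule lin_cong)
    fix x assume x: "x \<in> Poly_Mapping.keys (phi j)"
    then have "degM x - degB j \<in> S" using assms(2) by (auto simp: hdegs_def)
    then have "(\<Sum>n\<in>S. if degM x = degB j + n then bvec x else 0) = (\<Sum>n\<in>S. if n = degM x - degB j then bvec x else 0)"
      by (intro sum.cong) auto
    also have "\<dots> = bvec x" using \<open>degM x - degB j \<in> S\<close> assms(1) by simp
    finally show "(\<Sum>n\<in>S. if degM x = degB j + n then bvec x else 0) = bvec x" .
  qed
  finally show "phi j = (\<Sum>n\<in>S. hpart degB degM n phi) j" by simp
qed

lemma hext_sum:
  assumes fin: "finite I" and inj: "inj_on g I"
    and hom: "\<And>i. i \<in> I \<Longrightarrow> hom_homog degB degM (g i) (F i)"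
    and op0: "\<And>n. op n 0 = 0"
  shows "hext degB degM op (sum F I) = (\<Sum>i\<in>I. op (g i) (F i))"
proof -
  let ?phi = "sum F I"
  have sub: "hdegs degB degM ?phi \<subseteq> g ` I"
    using hdegs_sum[of degB degM F I] hom_homog_hdegs[OF hom] by blast
  have hp: "hpart degB degM (g i) ?phi = F i" if i: "i \<in> I" for i
  proof -
    have "hpart degB degM (g i) ?phi = (\<Sum>i'\<in>I. hpart degB degM (g i) (F i'))" by (rule hpart_sum)
    also have "\<dots> = (\<Sum>i'\<in>I. if i' = i then F i else 0)"
    proof (rule sum.cong[OF refl])
      fix i' assume i': "i' \<in> I"
      show "hpart degB degM (g i) (F i') = (if i' = i then F i else 0)"
      proof (cases "i' = i")
        case True then show ?thesis using hpart_same[OF hom[OF i]] by simp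
      next
        case False
        then have "g i \<noteq> g i'" using inj i i' by (auto dest: inj_onD)
        then show ?thesis using hpart_other[OF hom[OF i']] False by simp
      qed
    qed
    also have "\<dots> = F i" using i fin by simp
    finally show ?thesis .
  qed
  have "hext degB degM op ?phi = (\<lambda>j. \<Sum>n\<in>g ` I. op n (hpart degB degM n ?phi) j)"
    unfolding hext_def
  proof (rule ext, rule sum.mono_neutral_left)
    fix j
    show "finite (g ` I)" using fin by simp
    show "hdegs degB degM ?phi \<subseteq> g ` I" by (rule sub)
    show "\<forall>i\<in>g ` I - hdegs degB degM ?phi. op i (hpart degB degM i ?phi) j = 0"
      by (simp add: hpart_notin op0)
  qed
  also have "\<dots> = (\<lambda>j. \<Sum>i\<in>I. op (g i) (hpart degB degM (g i) ?phi) j)"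
    by (simp add: sum.reindex[OF inj])
  also have "\<dots> = (\<lambda>j. \<Sum>i\<in>I. op (g i) (F i) j)"
    by (simp add: hp)
  finally show ?thesis by (simp add: sum_app[abs_def])
qed

lemma hext_homog:
  assumes "hom_homog degB degM n phi" "\<And>n. op n 0 = 0"
  shows "hext degB degM op phi = op n phi"
  using hext_sum[of "{n}" "\<lambda>x. x" degB degM "\<lambda>_. phi" op] assms by simp

lemma hext_decomp:
  assumes "hom_gr degB degM phi" "\<And>n. op n 0 = 0"
  shows "hext degB degM op phi = (\<Sum>n\<in>hdegs degB degM phi. op n (hpart degB degM n phi))"
proof -
  have "hext degB degM op phi = hext degB degM op (\<Sum>n\<in>hdegs degB degM phi. hpart degB degM n phi)"
    using hpart_decomp[of "hdegs degB degM phi" degB degM phi] assms(1) unfolding hom_gr_def by simp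
  also have "\<dots> = (\<Sum>n\<in>hdegs degB degM phi. op n (hpart degB degM n phi))"
    by (rule hext_sum) (use assms in \<open>auto simp: hom_gr_def hpart_homog\<close>)
  finally show ?thesis .
qed


lemma hsc_sum: "hsc c (sum F I) = (\<Sum>i\<in>I. hsc c (F i))"
  by (rule ext) (simp add: hsc_def sum_app sc_sum)

lemma hsc_add: "hsc c (phi + psi) = hsc c phi + hsc c psi"
  by (rule ext) (simp add: hsc_def sc_add)

lemma hom_homog_add: "hom_homog degB degM n phi \<Longrightarrow> hom_homog degB degM n psi \<Longrightarrow> hom_homog degB degM n (phi + psi)"
  unfolding hom_homog_def
proof (intro allI ballI)
  fix j x assume a: "\<forall>j. \<forall>x\<in>Poly_Mapping.keys (phi j). degM x = degB j + n"
    "\<forall>j. \<forall>x\<in>Poly_Mapping.keys (psi j). degM x = degB j + n"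
    and x: "x \<in> Poly_Mapping.keys ((phi + psi) j)"
  from x have "x \<in> Poly_Mapping.keys (phi j + psi j)" by simp
  then have "x \<in> Poly_Mapping.keys (phi j) \<union> Poly_Mapping.keys (psi j)" by (rule subsetD[OF keys_add])
  then show "degM x = degB j + n" using a by auto
qed

lemma hom_homog_hsc: "hom_homog degB degM n phi \<Longrightarrow> hom_homog degB degM n (hsc c phi)"
  unfolding hom_homog_def hsc_def
proof (intro allI ballI)
  fix j x assume a: "\<forall>j. \<forall>x\<in>Poly_Mapping.keys (phi j). degM x = degB j + n"
    and x: "x \<in> Poly_Mapping.keys (sc c (phi j))"
  from x have "x \<in> Poly_Mapping.keys (phi j)" by (rule subsetD[OF keys_sc])
  then show "degM x = degB j + n" using a by auto
qed

lemma hom_gr_add: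
  assumes "hom_gr degB degM phi" "hom_gr degB degM psi"
  shows "hom_gr degB degM (phi + psi)"
proof -
  have "hdegs degB degM (phi + psi) \<subseteq> hdegs degB degM phi \<union> hdegs degB degM psi"
  proof
    fix t assume "t \<in> hdegs degB degM (phi + psi)"
    then obtain j x where t: "t = degM x - degB j" and x: "x \<in> Poly_Mapping.keys (phi j + psi j)"
      unfolding hdegs_def by auto
    from x have "x \<in> Poly_Mapping.keys (phi j) \<union> Poly_Mapping.keys (psi j)" by (rule subsetD[OF keys_add])
    then have "x \<in> Poly_Mapping.keys (phi j) \<or> x \<in> Poly_Mapping.keys (psi j)" by simp
    then show "t \<in> hdegs degB degM phi \<union> hdegs degB degM psi" using t unfolding hdegs_def by blast
  qed
  moreover have "finite (hdegs degB degM phi \<union> hdegs degB degM psi)" using assms unfolding hom_gr_def by simp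
  ultimately show ?thesis unfolding hom_gr_def by (rule finite_subset)
qed

lemma hext_zero: "hext degB degM op 0 = 0"
  by (rule ext) (simp add: hext_def hdegs_def)

lemma hext_add:
  assumes op0: "\<And>n. op n 0 = 0"
    and opadd: "\<And>n phi psi. op n (phi + psi) = op n phi + op n psi"
    and phi: "hom_gr degB degM phi" and psi: "hom_gr degB degM psi"
  shows "hext degB degM op (phi + psi) = hext degB degM op phi + hext degB degM op psi"
proof -
  let ?S = "hdegs degB degM phi \<union> hdegs degB degM psi"
  have fin: "finite ?S" using phi psi by (simp add: hom_gr_def)
  have p: "phi = (\<Sum>n\<in>?S. hpart degB degM n phi)" by (rule hpart_decomp[OF fin]) auto
  have q: "psi = (\<Sum>n\<in>?S. hpart degB degM n psi)" by (rule hpart_decomp[OF fin]) auto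
  have e: "phi + psi = (\<Sum>n\<in>?S. hpart degB degM n phi + hpart degB degM n psi)"
    by (simp only: sum.distrib p[symmetric] q[symmetric])
  have "hext degB degM op (phi + psi) = (\<Sum>n\<in>?S. op n (hpart degB degM n phi + hpart degB degM n psi))"
    unfolding e
    by (rule hext_sum[where g = "\<lambda>n. n"]) (use fin in \<open>auto simp: op0 intro!: hom_homog_add hpart_homog\<close>)
  also have "\<dots> = (\<Sum>n\<in>?S. op n (hpart degB degM n phi)) + (\<Sum>n\<in>?S. op n (hpart degB degM n psi))"
    by (simp only: opadd sum.distrib)
  also have "\<dots> = hext degB degM op phi + hext degB degM op psi"
  proof -
    have "hext degB degM op phi = hext degB degM op (\<Sum>n\<in>?S. hpart degB degM n phi)"
      by (rule arg_cong[where f = "hext degB degM op"]) (rule p)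
    also have "\<dots> = (\<Sum>n\<in>?S. op n (hpart degB degM n phi))"
      by (rule hext_sum[where g = "\<lambda>n. n"]) (use fin in \<open>auto simp: op0 intro!: hpart_homog\<close>)
    finally have 1: "hext degB degM op phi = (\<Sum>n\<in>?S. op n (hpart degB degM n phi))" .
    have "hext degB degM op psi = hext degB degM op (\<Sum>n\<in>?S. hpart degB degM n psi)"
      by (rule arg_cong[where f = "hext degB degM op"]) (rule q)
    also have "\<dots> = (\<Sum>n\<in>?S. op n (hpart degB degM n psi))"
      by (rule hext_sum[where g = "\<lambda>n. n"]) (use fin in \<open>auto simp: op0 intro!: hpart_homog\<close>)
    finally have 2: "hext degB degM op psi = (\<Sum>n\<in>?S. op n (hpart degB degM n psi))" .
    show ?thesis by (simp only: 1 2)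
  qed
  finally show ?thesis .
qed

lemma hext_hsc:
  assumes op0: "\<And>n. op n 0 = 0"
    and opsc: "\<And>n phi. op n (hsc c phi) = hsc c (op n phi)"
    and phi: "hom_gr degB degM phi"
  shows "hext degB degM op (hsc c phi) = hsc c (hext degB degM op phi)"
proof -
  let ?S = "hdegs degB degM phi"
  have fin: "finite ?S" using phi by (simp add: hom_gr_def)
  have p: "phi = (\<Sum>n\<in>?S. hpart degB degM n phi)" by (rule hpart_decomp[OF fin]) auto
  have e: "hsc c phi = (\<Sum>n\<in>?S. hsc c (hpart degB degM n phi))"
    by (simp only: hsc_sum[symmetric] p[symmetric])
  have "hext degB degM op (hsc c phi) = (\<Sum>n\<in>?S. op n (hsc c (hpart degB degM n phi)))"
    unfolding e
    by (rule hext_sum[where g = "\<lambda>n. n"]) (use fin in \<open>auto simp: op0 intro!: hom_homog_hsc hpart_homog\<close>)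
  also have "\<dots> = hsc c (\<Sum>n\<in>?S. op n (hpart degB degM n phi))"
    by (simp only: opsc hsc_sum)
  also have "(\<Sum>n\<in>?S. op n (hpart degB degM n phi)) = hext degB degM op phi"
    using phi op0 by (simp add: hext_decomp)
  finally show ?thesis .
qed

lemma hom_gr_sum_gen: "finite I \<Longrightarrow> (\<And>i. i \<in> I \<Longrightarrow> hom_gr degB degM (F i)) \<Longrightarrow> hom_gr degB degM (sum F I)"
proof (induction I rule: finite_induct)
  case empty then show ?case by (simp add: hom_gr_def hdegs_def)
next
  case (insert x I)
  then show ?case by (simp only: sum.insert[OF insert.hyps]) (rule hom_gr_add; simp)
qed

lemma hext_sum_gen:
  assumes op0: "\<And>n. op n 0 = 0"
    and opadd: "\<And>n phi psi. op n (phi + psi) = op n phi + op n psi"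
  shows "finite I \<Longrightarrow> (\<And>i. i \<in> I \<Longrightarrow> hom_gr degB degM (F i)) \<Longrightarrow> hext degB degM op (sum F I) = (\<Sum>i\<in>I. hext degB degM op (F i))"
proof (induction I rule: finite_induct)
  case empty then show ?case by (simp only: sum.empty hext_zero)
next
  case (insert x I)
  have "hext degB degM op (sum F (insert x I)) = hext degB degM op (F x + sum F I)"
    by (simp only: sum.insert[OF insert.hyps])
  also have "\<dots> = hext degB degM op (F x) + hext degB degM op (sum F I)"
    by (rule hext_add[OF op0 opadd]) (use insert in \<open>auto intro: hom_gr_sum_gen\<close>)
  also have "\<dots> = (\<Sum>i\<in>insert x I. hext degB degM op (F i))"
    using insert.IH insert.prems by (simp only: sum.insert[OF insert.hyps] insert_iff simp_thms)
  finally show ?case .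
qed




lemma ksign_eq2: "x - y = 2 * z \<Longrightarrow> ksign x = (ksign y :: 'k::field)"
  by (rule ksign_cong) simp

context DGC
begin

lemma act_lin: "act degB Delta phi beta j = lin (\<lambda>(p, q). sc (ksign (degB p * degB q) * beta q) (phi p)) (Delta j)"
  unfolding act_def lin_def
  by (rule sum.cong[OF refl]) (auto simp: mult.assoc)

lemma act_add: "act degB Delta (phi + psi) beta = act degB Delta phi beta + act degB Delta psi beta"
  by (rule ext) (simp add: act_lin lin_fadd[symmetric] sc_add case_prod_unfold)
lemma act_hsc: "act degB Delta (hsc c phi) beta = hsc c (act degB Delta phi beta)"
  by (rule ext) (simp add: act_lin hsc_def sc_lin case_prod_unfold mult_ac)
lemma act_minus: "act degB Delta (phi - psi) beta = act degB Delta phi beta - act degB Delta psi beta"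
  by (rule ext) (simp add: act_lin lin_fminus[symmetric] sc_minus case_prod_unfold)
lemma act_zero[simp]: "act degB Delta 0 beta = 0"
  by (rule ext) (simp add: act_lin case_prod_unfold)
lemma act_sum: "act degB Delta (sum F I) beta = (\<Sum>i\<in>I. act degB Delta (F i) beta)"
proof (induction I rule: infinite_finite_induct)
  case (infinite A) then show ?case by (simp only: sum.infinite[OF infinite] act_zero)
next
  case empty show ?case by (simp only: sum.empty act_zero)
next
  case (insert x F) then show ?case by (simp only: sum.insert[OF insert.hyps] act_add insert.IH)
qed

lemma act_add2: "act degB Delta phi (beta + gamma) = act degB Delta phi beta + act degB Delta phi gamma"
  by (rule ext) (simp add: act_lin lin_fadd[symmetric] sc_addc distrib_left case_prod_unfold)
lemma act_csc: "act degB Delta phi (\<lambda>j. c * beta j) = hsc c (act degB Delta phi beta)"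
  by (rule ext) (simp add: act_lin hsc_def sc_lin case_prod_unfold mult_ac)
lemma act_zero2[simp]: "act degB Delta phi (\<lambda>j. 0) = 0"
  by (rule ext) (simp add: act_lin case_prod_unfold)
lemma act_sum2: "act degB Delta phi (sum B I) = (\<Sum>i\<in>I. act degB Delta phi (B i))"
proof (induction I rule: infinite_finite_induct)
  case (infinite A) then show ?case using act_zero2 by (simp add: zero_fun_def)
next
  case empty then show ?case using act_zero2 by (simp add: zero_fun_def)
next
  case (insert x F) then show ?case by (simp only: sum.insert[OF insert.hyps] act_add2 insert.IH)
qed

lemma act_eps: "act degB Delta phi eps = phi"
proof
  fix j
  have "act degB Delta phi eps j = lin (\<lambda>(p, q). sc (eps q) (phi p)) (Delta j)"
    unfolding act_lin
  proof (rule lin_cong2)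
    fix p q show "(case (p, q) of (p, q) \<Rightarrow> sc (ksign (degB p * degB q) * eps q) (phi p)) = (case (p, q) of (p, q) \<Rightarrow> sc (eps q) (phi p))"
      by (cases "eps q = 0") (auto dest: deg_eps)
  qed
  then show "act degB Delta phi eps j = phi j" by (simp add: counit2)
qed


lemma dual_mult_lfun: "dual_mult degB Delta beta gamma r = lfun (\<lambda>(b, c). ksign (degB b * degB c) * beta b * gamma c) (Delta r)"
  unfolding dual_mult_def lfun_def by (rule sum.cong[OF refl]) (auto simp: mult_ac)

lemma sc_mult_lfun: "sc (x * lfun g w) v = lin (\<lambda>y. sc (x * g y) v) w"
  by (rule poly_mapping_eqI) (simp add: lfun_def lookup_lin sum_distrib_left sum_distrib_right mult_ac)

lemma act_assoc: "act degB Delta (act degB Delta phi beta) gamma = act degB Delta phi (dual_mult degB Delta beta gamma)"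
proof
  fix j
  have "act degB Delta (act degB Delta phi beta) gamma j
     = lin (\<lambda>(p, q). lin (\<lambda>(a, b). sc (ksign (degB p * degB q) * gamma q * (ksign (degB a * degB b) * beta b)) (phi a)) (Delta p)) (Delta j)"
    by (simp add: act_lin sc_lin case_prod_unfold)
  also have "\<dots> = lin (\<lambda>(p, q). lin (\<lambda>(a, b). sc (ksign ((degB a + degB b) * degB q) * gamma q * (ksign (degB a * degB b) * beta b)) (phi a)) (Delta p)) (Delta j)"
    apply (rule lin_cong2)
    apply (simp only: prod.case)
    apply (rule lin_cong2)
    apply (simp add: deg_Delta)
    done
  also have "\<dots> = lin (\<lambda>(a, r). lin (\<lambda>(b, c). sc (ksign ((degB a + degB b) * degB c) * gamma c * (ksign (degB a * degB b) * beta b)) (phi a)) (Delta r)) (Delta j)"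
    using coassoc[of "\<lambda>(a, b, c). sc (ksign ((degB a + degB b) * degB c) * gamma c * (ksign (degB a * degB b) * beta b)) (phi a)" j]
    by simp
  also have "\<dots> = lin (\<lambda>(a, r). lin (\<lambda>(b, c). sc (ksign (degB a * (degB b + degB c)) * (ksign (degB b * degB c) * beta b * gamma c)) (phi a)) (Delta r)) (Delta j)"
    apply (rule lin_cong2)
    apply (simp only: prod.case)
    apply (rule lin_cong2)
    apply (simp add: distrib_left distrib_right ksign_add mult_ac)
    done
  also have "\<dots> = lin (\<lambda>(a, r). lin (\<lambda>(b, c). sc (ksign (degB a * degB r) * (ksign (degB b * degB c) * beta b * gamma c)) (phi a)) (Delta r)) (Delta j)"
    apply (rule lin_cong2)
    apply (simp only: prod.case)
    apply (rule lin_cong2)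
    apply (simp add: deg_Delta)
    done
  also have "\<dots> = act degB Delta phi (dual_mult degB Delta beta gamma) j"
    by (simp add: act_lin dual_mult_lfun sc_mult_lfun case_prod_unfold)
  finally show "act degB Delta (act degB Delta phi beta) gamma j = act degB Delta phi (dual_mult degB Delta beta gamma) j" .
qed


lemma homog_act:
  assumes phi: "hom_homog degB degM n phi" and beta: "dual_homog degB m beta"
  shows "hom_homog degB degM (n + m) (act degB Delta phi beta)"
  unfolding hom_homog_homv act_lin
proof (intro allI homv_lin)
  fix j pq assume pq: "pq \<in> Poly_Mapping.keys (Delta j)"
  obtain p q where pq': "pq = (p, q)" by fastforce
  show "homv degM (degB j + (n + m)) ((\<lambda>(p, q). sc (ksign (degB p * degB q) * beta q) (phi p)) pq)"
  proof (cases "beta q = 0")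
    case True then show ?thesis using pq' by simp
  next
    case False
    then have "degB q = - m" using beta by (simp add: dual_homog_def)
    moreover have "degB p + degB q = degB j" using deg_Delta pq pq' by simp
    moreover have "homv degM (degB p + n) (phi p)" using phi by (simp add: hom_homog_homv)
    ultimately show ?thesis using pq' by (simp add: homv_sc algebra_simps)
  qed
qed

definition bpart :: "int \<Rightarrow> ('b \<Rightarrow> 'k) \<Rightarrow> ('b \<Rightarrow> 'k)" where
  "bpart m beta = (\<lambda>j. if degB j = - m then beta j else 0)"

definition bdegs :: "('b \<Rightarrow> 'k) \<Rightarrow> int set" where
  "bdegs beta = (\<lambda>j. - degB j) ` {j. beta j \<noteq> 0}"

lemma bpart_homog: "dual_homog degB m (bpart m beta)"
  by (simp add: dual_homog_def bpart_def)

lemma finite_bdegs: "dual_el degB beta \<Longrightarrow> finite (bdegs beta)"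
proof -
  assume "dual_el degB beta"
  then have "finite ((\<lambda>x. - x) ` {degB j | j. beta j \<noteq> 0})" unfolding dual_el_def by simp
  moreover have "bdegs beta = (\<lambda>x. - x) ` {degB j | j. beta j \<noteq> 0}" unfolding bdegs_def by auto
  ultimately show ?thesis by simp
qed

lemma bpart_decomp: "dual_el degB beta \<Longrightarrow> beta = (\<Sum>m\<in>bdegs beta. bpart m beta)"
proof
  fix j assume fin: "dual_el degB beta"
  have "(\<Sum>m\<in>bdegs beta. bpart m beta) j = (\<Sum>m\<in>bdegs beta. if m = - degB j then beta j else 0)"
    by (simp add: sum_app bpart_def) (rule sum.cong, auto)
  also have "\<dots> = beta j"
    using finite_bdegs[OF fin] by (auto simp: bdegs_def)
  finally show "beta j = (\<Sum>m\<in>bdegs beta. bpart m beta) j" by simp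
qed

lemma hom_gr_act:
  assumes phi: "hom_gr degB degM phi" and beta: "dual_el degB beta"
  shows "hom_gr degB degM (act degB Delta phi beta)"
proof -
  let ?N = "hdegs degB degM phi" and ?M = "bdegs beta"
  have "act degB Delta phi beta = act degB Delta (\<Sum>n\<in>?N. hpart degB degM n phi) (\<Sum>m\<in>?M. bpart m beta)"
    using hpart_decomp[of ?N degB degM phi] bpart_decomp[OF beta] phi unfolding hom_gr_def by simp
  also have "\<dots> = (\<Sum>nm\<in>?M \<times> ?N. act degB Delta (hpart degB degM (snd nm) phi) (bpart (fst nm) beta))"
    by (simp only: act_sum act_sum2 sum.cartesian_product case_prod_unfold)
  finally have eq: "act degB Delta phi beta = \<dots>" .
  show ?thesis unfolding eq
    by (rule hom_gr_sum[where g = "\<lambda>nm. snd nm + fst nm"])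
       (use phi finite_bdegs[OF beta] in \<open>auto simp: hom_gr_def intro!: homog_act hpart_homog bpart_homog\<close>)
qed

lemma dual_d_sum: "dual_d degB d (sum B I) = (\<Sum>i\<in>I. dual_d degB d (B i))"
proof (induction I rule: infinite_finite_induct)
  case (infinite A) then show ?case by (simp add: dual_d_def lfun_def fun_eq_iff)
next
  case empty then show ?case by (simp add: dual_d_def lfun_def fun_eq_iff)
next
  case (insert x F)
  have "dual_d degB d (B x + sum B F) = dual_d degB d (B x) + dual_d degB d (sum B F)"
    by (simp add: dual_d_def lfun_def fun_eq_iff sum.distrib distrib_left)
  then show ?case using insert by (simp only: sum.insert[OF insert.hyps])
qed


lemma sign_L1:
  fixes x :: 'k
  assumes "degB b = - m" "degB r = degB p + degB a"
  shows "ksign (degB p * (n + m)) * (ksign (degB a * degB b) * x) = ksign (degB r * degB b) * x * ksign (degB p * n)"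
proof -
  have "ksign (degB p * (n + m) + degB a * degB b) = (ksign (degB r * degB b + degB p * n) :: 'k)"
    by (rule ksign_eq2[where z = "degB p * m"]) (simp add: assms algebra_simps)
  then have e: "ksign (degB p * (n + m)) * ksign (degB a * degB b) = (ksign (degB r * degB b) * ksign (degB p * n) :: 'k)"
    by (simp only: ksign_add)
  have "ksign (degB p * (n + m)) * (ksign (degB a * degB b) * x) = (ksign (degB p * (n + m)) * ksign (degB a * degB b)) * x"
    by (rule mult.assoc[symmetric])
  also have "\<dots> = (ksign (degB r * degB b) * ksign (degB p * n)) * x" by (simp only: e)
  also have "\<dots> = ksign (degB r * degB b) * x * ksign (degB p * n)" by (simp only: mult_ac)
  finally show ?thesis .
qed

lemma fvee_act:
  assumes beta: "dual_homog degB m beta"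
  shows "fvee_h degB Delta eps f (n + m) (act degB Delta phi beta) = act degB Delta (fvee_h degB Delta eps f n phi) beta"
proof
  fix j
  let ?C = "lin (comp eps f)"
  have "fvee_h degB Delta eps f (n + m) (act degB Delta phi beta) j
     = lin (\<lambda>(p, q). lin (\<lambda>(a, b). sc (ksign (degB p * (n + m)) * (ksign (degB a * degB b) * beta b)) (?C (ltens p (phi a)))) (Delta q)) (Delta j)"
    by (simp add: fvee_h_def act_lin ltens_lin ltens_sc lin_comp lin_sc sc_lin case_prod_unfold)
  also have "\<dots> = lin (\<lambda>(r, b). lin (\<lambda>(p, a). sc (ksign (degB p * (n + m)) * (ksign (degB a * degB b) * beta b)) (?C (ltens p (phi a)))) (Delta r)) (Delta j)"
    using coassoc[of "\<lambda>(p, a, b). sc (ksign (degB p * (n + m)) * (ksign (degB a * degB b) * beta b)) (?C (ltens p (phi a)))" j]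
    by simp
  also have "\<dots> = lin (\<lambda>(r, b). lin (\<lambda>(p, a). sc (ksign (degB r * degB b) * beta b * ksign (degB p * n)) (?C (ltens p (phi a)))) (Delta r)) (Delta j)"
  proof (rule lin_cong2, simp only: prod.case, rule lin_cong2, simp only: prod.case)
    fix r b p a assume pa: "(p, a) \<in> Poly_Mapping.keys (Delta r)"
    show "sc (ksign (degB p * (n + m)) * (ksign (degB a * degB b) * beta b)) (?C (ltens p (phi a)))
        = sc (ksign (degB r * degB b) * beta b * ksign (degB p * n)) (?C (ltens p (phi a)))"
    proof (cases "beta b = 0")
      case False
      then have b1: "degB b = - m" using beta by (simp add: dual_homog_def)
      have r1: "degB r = degB p + degB a" using deg_Delta[OF pa] by simp
      show ?thesis by (simp only: sign_L1[OF b1 r1])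
    qed simp
  qed
  also have "\<dots> = act degB Delta (fvee_h degB Delta eps f n phi) beta j"
    by (simp add: fvee_h_def act_lin sc_lin case_prod_unfold)
  finally show "fvee_h degB Delta eps f (n + m) (act degB Delta phi beta) j = act degB Delta (fvee_h degB Delta eps f n phi) beta j" .
qed


lemma sign_T1:
  fixes y :: 'k
  assumes "degB p' = degB p + 1" "degB q = - m"
  shows "ksign (n + m) * (ksign (degB p' * degB q) * y) = ksign n * (ksign (degB p * degB q) * y)"
  using assms by (simp add: ksign_def even_add even_mult_iff algebra_simps)

lemma sign_T2:
  fixes y :: 'k
  assumes "degB q' = degB q + 1" "degB q' = - m"
  shows "ksign (n + m) * (ksign (degB p) * (ksign (degB p * degB q') * y)) = - (ksign n * (ksign (degB p * degB q) * (ksign (degB q) * y)))"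
proof -
  have q: "degB q = - m - 1" using assms by simp
  show ?thesis using assms(2) unfolding q by (simp add: ksign_def even_add even_mult_iff algebra_simps)
qed

lemma lfun_cmult: "c * lfun g w = lfun (\<lambda>y. c * g y) w"
  by (simp add: lfun_def sum_distrib_left mult_ac)

lemma act_fun: "act degB Delta phi beta = (\<lambda>j. lin (\<lambda>(p, q). sc (ksign (degB p * degB q) * beta q) (phi p)) (Delta j))"
  by (rule ext) (rule act_lin)

lemma L2:
  assumes beta: "dual_homog degB m beta"
  shows "sc (ksign (n + m)) (lin (act degB Delta phi beta) (d j))
       = sc (ksign n) (act degB Delta (\<lambda>r. lin phi (d r)) beta j) - sc (ksign n) (act degB Delta phi (dual_d degB d beta) j)"
proof -
  have "sc (ksign (n + m)) (lin (act degB Delta phi beta) (d j))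
     = lin (\<lambda>(p, q). lin (\<lambda>p'. sc (ksign (n + m) * (ksign (degB p' * degB q) * beta q)) (phi p')) (d p)
          + lin (\<lambda>q'. sc (ksign (n + m) * (ksign (degB p) * (ksign (degB p * degB q') * beta q'))) (phi p)) (d q)) (Delta j)"
  proof -
    have c: "lin (act degB Delta phi beta) (d j) = lin (\<lambda>(p, q). lin (\<lambda>p'. (\<lambda>(p, q). sc (ksign (degB p * degB q) * beta q) (phi p)) (p', q)) (d p)
       + sc (ksign (degB p)) (lin (\<lambda>q'. (\<lambda>(p, q). sc (ksign (degB p * degB q) * beta q) (phi p)) (p, q')) (d q))) (Delta j)"
      unfolding act_fun by (rule coder)
    show ?thesis unfolding c by (simp add: sc_lin sc_add case_prod_unfold)
  qed
  also have "\<dots> = lin (\<lambda>(p, q). lin (\<lambda>p'. sc (ksign n * (ksign (degB p * degB q) * beta q)) (phi p')) (d p)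
          - lin (\<lambda>q'. sc (ksign n * (ksign (degB p * degB q) * (ksign (degB q) * beta q'))) (phi p)) (d q)) (Delta j)"
  proof (rule lin_cong2, simp only: prod.case)
    fix p q
    have 1: "lin (\<lambda>p'. sc (ksign (n + m) * (ksign (degB p' * degB q) * beta q)) (phi p')) (d p)
        = lin (\<lambda>p'. sc (ksign n * (ksign (degB p * degB q) * beta q)) (phi p')) (d p)"
    proof (rule lin_cong)
      fix p' assume p': "p' \<in> Poly_Mapping.keys (d p)"
      show "sc (ksign (n + m) * (ksign (degB p' * degB q) * beta q)) (phi p') = sc (ksign n * (ksign (degB p * degB q) * beta q)) (phi p')"
      proof (cases "beta q = 0")
        case False
        then have q1: "degB q = - m" using beta by (simp add: dual_homog_def)
        show ?thesis by (simp only: sign_T1[OF deg_d[OF p'] q1])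
      qed simp
    qed
    have 2: "lin (\<lambda>q'. sc (ksign (n + m) * (ksign (degB p) * (ksign (degB p * degB q') * beta q'))) (phi p)) (d q)
        = lin (\<lambda>q'. - sc (ksign n * (ksign (degB p * degB q) * (ksign (degB q) * beta q'))) (phi p)) (d q)"
    proof (rule lin_cong)
      fix q' assume q': "q' \<in> Poly_Mapping.keys (d q)"
      show "sc (ksign (n + m) * (ksign (degB p) * (ksign (degB p * degB q') * beta q'))) (phi p) = - sc (ksign n * (ksign (degB p * degB q) * (ksign (degB q) * beta q'))) (phi p)"
      proof (cases "beta q' = 0")
        case False
        then have q1: "degB q' = - m" using beta by (simp add: dual_homog_def)
        have "sc (ksign (n + m) * (ksign (degB p) * (ksign (degB p * degB q') * beta q'))) (phi p)
            = sc (- (ksign n * (ksign (degB p * degB q) * (ksign (degB q) * beta q')))) (phi p)"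
          by (simp only: sign_T2[OF deg_d[OF q'] q1])
        then show ?thesis by (simp add: sc_neg1[symmetric] del: sc_sc) (simp add: sc_neg1)
      qed simp
    qed
    show "lin (\<lambda>p'. sc (ksign (n + m) * (ksign (degB p' * degB q) * beta q)) (phi p')) (d p)
          + lin (\<lambda>q'. sc (ksign (n + m) * (ksign (degB p) * (ksign (degB p * degB q') * beta q'))) (phi p)) (d q)
        = lin (\<lambda>p'. sc (ksign n * (ksign (degB p * degB q) * beta q)) (phi p')) (d p)
          - lin (\<lambda>q'. sc (ksign n * (ksign (degB p * degB q) * (ksign (degB q) * beta q'))) (phi p)) (d q)"
      unfolding 1 2 lin_fuminus by simp
  qed
  also have "\<dots> = sc (ksign n) (act degB Delta (\<lambda>r. lin phi (d r)) beta j) - sc (ksign n) (act degB Delta phi (dual_d degB d beta) j)"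
    by (simp add: act_lin dual_d_def lfun_cmult sc_lfun sc_lin lin_fminus case_prod_unfold mult_ac)
  finally show ?thesis .
qed


lemma fvee_h_add: "fvee_h degB Delta eps f n (phi + psi) = fvee_h degB Delta eps f n phi + fvee_h degB Delta eps f n psi"
  by (rule ext) (simp add: fvee_h_def ltens_add lin_add sc_add lin_fadd[symmetric] case_prod_unfold)
lemma fvee_h_hsc: "fvee_h degB Delta eps f n (hsc c phi) = hsc c (fvee_h degB Delta eps f n phi)"
  by (rule ext) (simp add: fvee_h_def hsc_def ltens_sc lin_sc sc_lin case_prod_unfold mult.commute)
lemma fvee_h_zero: "fvee_h degB Delta eps f n 0 = 0"
  by (rule ext) (simp add: fvee_h_def case_prod_unfold)

lemma dvee_fvee: "dvee_h degB Delta eps d dM n phi = fvee_h degB Delta eps dM n phi - hsc (ksign n) (\<lambda>j. lin phi (d j))"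
  by (rule ext) (simp add: dvee_h_def fvee_h_def hsc_def)

lemma lin_plus_fun: "lin (f + g) v = lin f v + lin g v"
  by (rule poly_mapping_eqI) (simp add: lookup_lin lookup_add sum.distrib algebra_simps)
lemma lin_zero_fun[simp]: "lin 0 v = 0"
  by (rule poly_mapping_eqI) (simp add: lookup_lin)

lemma dvee_h_add: "dvee_h degB Delta eps d dM n (phi + psi) = dvee_h degB Delta eps d dM n phi + dvee_h degB Delta eps d dM n psi"
  by (rule ext) (simp add: dvee_fvee fvee_h_add hsc_def lin_plus_fun sc_add)
lemma dvee_h_hsc: "dvee_h degB Delta eps d dM n (hsc c phi) = hsc c (dvee_h degB Delta eps d dM n phi)"
  by (rule ext) (simp add: dvee_fvee fvee_h_hsc[unfolded hsc_def] hsc_def lin_fsc sc_minus mult.commute)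
lemma dvee_h_zero: "dvee_h degB Delta eps d dM n 0 = 0"
  by (rule ext) (simp add: dvee_fvee fvee_h_zero hsc_def)

lemma leibniz_h:
  assumes beta: "dual_homog degB m beta"
  shows "dvee_h degB Delta eps d dM (n + m) (act degB Delta phi beta)
       = act degB Delta (dvee_h degB Delta eps d dM n phi) beta + hsc (ksign n) (act degB Delta phi (dual_d degB d beta))"
proof
  fix j
  have L: "sc (ksign (n + m)) (lin (act degB Delta phi beta) (d j))
       = sc (ksign n) (act degB Delta (\<lambda>r. lin phi (d r)) beta j) - sc (ksign n) (act degB Delta phi (dual_d degB d beta) j)"
    by (rule L2[OF beta])
  show "dvee_h degB Delta eps d dM (n + m) (act degB Delta phi beta) j
       = (act degB Delta (dvee_h degB Delta eps d dM n phi) beta + hsc (ksign n) (act degB Delta phi (dual_d degB d beta))) j"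
    by (simp only: dvee_fvee fvee_act[OF beta] act_minus act_hsc) (simp add: hsc_def L)
qed

end



context DGC
begin

lemma D_decomp: "hom_gr degB degM phi \<Longrightarrow> dvee degB Delta eps d degM dM phi = (\<Sum>n\<in>hdegs degB degM phi. dvee_h degB Delta eps d dM n (hpart degB degM n phi))"
  unfolding dvee_def by (rule hext_decomp) (simp_all add: dvee_h_zero)

lemma D_homog: "hom_homog degB degM n phi \<Longrightarrow> dvee degB Delta eps d degM dM phi = dvee_h degB Delta eps d dM n phi"
  unfolding dvee_def by (rule hext_homog) (simp_all add: dvee_h_zero)

lemma F_decomp: "hom_gr degB degM phi \<Longrightarrow> fvee degB Delta eps degM f phi = (\<Sum>n\<in>hdegs degB degM phi. fvee_h degB Delta eps f n (hpart degB degM n phi))"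
  unfolding fvee_def by (rule hext_decomp) (simp_all add: fvee_h_zero)

lemma F_homog: "hom_homog degB degM n phi \<Longrightarrow> fvee degB Delta eps degM f phi = fvee_h degB Delta eps f n phi"
  unfolding fvee_def by (rule hext_homog) (simp_all add: fvee_h_zero)

lemma part1:
  assumes M: "free_dg_comodule degB Delta d degM dM"
  shows "right_dg_module_hom degB Delta eps d degM (dvee degB Delta eps d degM dM)"
proof -
  let ?D = "dvee degB Delta eps d degM dM"
  have a: "hom_gr degB degM (?D phi)" if phi: "hom_gr degB degM phi" for phi
    unfolding D_decomp[OF phi]
    by (rule hom_gr_sum[where g = "\<lambda>n. n + 1"])
       (use phi in \<open>auto simp: hom_gr_def intro!: homog_dvee_h[OF M] hpart_homog\<close>)
  have b: "hom_homog degB degM (n + 1) (?D phi)" if phi: "hom_homog degB degM n phi" for n phi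
    unfolding D_homog[OF phi] by (rule homog_dvee_h[OF M phi])
  have c: "?D (phi + psi) = ?D phi + ?D psi" if "hom_gr degB degM phi" "hom_gr degB degM psi" for phi psi
    unfolding dvee_def
    by (rule hext_add[where op = "dvee_h degB Delta eps d dM"]) (simp_all add: dvee_h_zero dvee_h_add that)
  have dd: "?D (hsc c phi) = hsc c (?D phi)" if "hom_gr degB degM phi" for c phi
    unfolding dvee_def
    by (rule hext_hsc[where op = "dvee_h degB Delta eps d dM"]) (simp_all add: dvee_h_zero dvee_h_hsc that)
  have e: "?D (?D phi) = 0" if phi: "hom_gr degB degM phi" for phi
  proof -
    let ?S = "hdegs degB degM phi"
    have "?D (?D phi) = ?D (\<Sum>n\<in>?S. dvee_h degB Delta eps d dM n (hpart degB degM n phi))"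
      by (rule arg_cong[where f = ?D]) (rule D_decomp[OF phi])
    also have "\<dots> = (\<Sum>n\<in>?S. dvee_h degB Delta eps d dM (n + 1) (dvee_h degB Delta eps d dM n (hpart degB degM n phi)))"
      unfolding dvee_def
      by (rule hext_sum) (use phi in \<open>auto simp: hom_gr_def dvee_h_zero inj_on_def intro!: homog_dvee_h[OF M] hpart_homog\<close>)
    also have "\<dots> = 0"
      by (simp add: dvee_dvee[OF M] zero_fun_def[symmetric])
    finally show ?thesis .
  qed
  have n: "?D (act degB Delta phi beta) = act degB Delta (?D phi) beta + hsc (ksign n) (act degB Delta phi (dual_d degB d beta))"
    if phi: "hom_homog degB degM n phi" and beta: "dual_el degB beta" for n phi beta
  proof -
    let ?M = "bdegs beta"
    let ?B = "\<Sum>m\<in>?M. bpart m beta"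
    have fin: "finite ?M" by (rule finite_bdegs[OF beta])
    have eqb: "beta = ?B" by (rule bpart_decomp[OF beta])
    have "?D (act degB Delta phi ?B) = ?D (\<Sum>m\<in>?M. act degB Delta phi (bpart m beta))"
      by (simp only: act_sum2)
    also have "\<dots> = (\<Sum>m\<in>?M. dvee_h degB Delta eps d dM (n + m) (act degB Delta phi (bpart m beta)))"
      unfolding dvee_def
      by (rule hext_sum) (use fin in \<open>auto simp: dvee_h_zero inj_on_def intro!: homog_act phi bpart_homog\<close>)
    also have "\<dots> = (\<Sum>m\<in>?M. act degB Delta (dvee_h degB Delta eps d dM n phi) (bpart m beta)
                  + hsc (ksign n) (act degB Delta phi (dual_d degB d (bpart m beta))))"
      by (simp only: leibniz_h[OF bpart_homog])
    also have "\<dots> = act degB Delta (?D phi) ?B + hsc (ksign n) (act degB Delta phi (dual_d degB d ?B))"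
      by (simp only: sum.distrib act_sum2 dual_d_sum hsc_sum D_homog[OF phi])
    finally have "?D (act degB Delta phi ?B) = act degB Delta (?D phi) ?B + hsc (ksign n) (act degB Delta phi (dual_d degB d ?B))" .
    then show ?thesis by (simp only: eqb[symmetric])
  qed
  show ?thesis
    unfolding right_dg_module_hom_def
    using a b c dd e n
    by (simp add: hom_gr_act homog_act act_add act_add2 act_hsc act_csc act_assoc act_eps)
qed


lemma fvee_h_fadd: "fvee_h degB Delta eps (\<lambda>y. f y + g y) n phi = fvee_h degB Delta eps f n phi + fvee_h degB Delta eps g n phi"
  by (rule ext) (simp add: fvee_h_def comp_E E_add lin_fadd sc_add case_prod_unfold)

lemma fvee_h_fsc: "fvee_h degB Delta eps (\<lambda>y. sc c (f y)) n phi = hsc c (fvee_h degB Delta eps f n phi)"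
proof -
  have i: "lin (comp eps (\<lambda>y. sc c (f y))) w = sc c (lin (comp eps f) w)" for w
    by (simp add: comp_E E_sc lin_fsc)
  show ?thesis by (rule ext) (simp add: fvee_h_def hsc_def i sc_lin case_prod_unfold mult.commute)
qed

lemma comod_deg: "comod_hom degB Delta degM degN n f \<Longrightarrow> \<forall>y. \<forall>z\<in>Poly_Mapping.keys (f y). tdeg degB degN z = tdeg degB degM y + n"
  unfolding comod_hom_def by blast

lemma part2_single:
  assumes M: "free_dg_comodule degB Delta d degM dM"
    and N: "free_dg_comodule degB Delta d degN dN"
    and f: "comod_hom degB Delta degM degN n f"
  shows "(\<forall>phi. hom_gr degB degM phi \<longrightarrow> hom_gr degB degN (fvee degB Delta eps degM f phi)) \<and>
           (\<forall>k phi. hom_homog degB degM k phi \<longrightarrow>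
              hom_homog degB degN (k + n) (fvee degB Delta eps degM f phi)) \<and>
           (\<forall>phi psi. hom_gr degB degM phi \<longrightarrow> hom_gr degB degM psi \<longrightarrow>
              fvee degB Delta eps degM f (phi + psi)
                = fvee degB Delta eps degM f phi + fvee degB Delta eps degM f psi) \<and>
           (\<forall>c phi. hom_gr degB degM phi \<longrightarrow>
              fvee degB Delta eps degM f (hsc c phi) = hsc c (fvee degB Delta eps degM f phi)) \<and>
           (\<forall>phi beta. hom_gr degB degM phi \<longrightarrow> dual_el degB beta \<longrightarrow>
              fvee degB Delta eps degM f (act degB Delta phi beta)
                = act degB Delta (fvee degB Delta eps degM f phi) beta) \<and>
           (\<forall>phi. hom_gr degB degM phi \<longrightarrow>
              fvee degB Delta eps degM (\<lambda>y. lin dN (f y) - sc (ksign n) (lin f (dM y))) phi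
                = dvee degB Delta eps d degN dN (fvee degB Delta eps degM f phi)
                  - hsc (ksign n) (fvee degB Delta eps degM f (dvee degB Delta eps d degM dM phi)))"
proof -
  let ?F = "fvee degB Delta eps degM f"
  have deg: "\<forall>y. \<forall>z\<in>Poly_Mapping.keys (f y). tdeg degB degN z = tdeg degB degM y + n"
    by (rule comod_deg[OF f])
  have a: "hom_gr degB degN (?F phi)" if phi: "hom_gr degB degM phi" for phi
    unfolding F_decomp[OF phi]
    by (rule hom_gr_sum[where g = "\<lambda>k. k + n"])
       (use phi in \<open>auto simp: hom_gr_def intro!: homog_fvee_h[OF deg] hpart_homog\<close>)
  have b: "hom_homog degB degN (k + n) (?F phi)" if phi: "hom_homog degB degM k phi" for k phi
    unfolding F_homog[OF phi] by (rule homog_fvee_h[OF deg phi])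
  have c: "?F (phi + psi) = ?F phi + ?F psi" if "hom_gr degB degM phi" "hom_gr degB degM psi" for phi psi
    unfolding fvee_def
    by (rule hext_add[where op = "fvee_h degB Delta eps f"]) (simp_all add: fvee_h_zero fvee_h_add that)
  have dd: "?F (hsc c phi) = hsc c (?F phi)" if "hom_gr degB degM phi" for c phi
    unfolding fvee_def
    by (rule hext_hsc[where op = "fvee_h degB Delta eps f"]) (simp_all add: fvee_h_zero fvee_h_hsc that)
  have e: "?F (act degB Delta phi beta) = act degB Delta (?F phi) beta"
    if phi: "hom_gr degB degM phi" and beta: "dual_el degB beta" for phi beta
  proof -
    let ?N = "hdegs degB degM phi" and ?M = "bdegs beta"
    have finN: "finite ?N" using phi by (simp add: hom_gr_def)
    have finM: "finite ?M" by (rule finite_bdegs[OF beta])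
    have eqp: "phi = (\<Sum>k\<in>?N. hpart degB degM k phi)" by (rule hpart_decomp[OF finN]) simp
    have eqb: "beta = (\<Sum>m\<in>?M. bpart m beta)" by (rule bpart_decomp[OF beta])
    have "act degB Delta phi beta = act degB Delta (\<Sum>k\<in>?N. hpart degB degM k phi) (\<Sum>m\<in>?M. bpart m beta)"
      by (rule arg_cong2[where f = "act degB Delta"]) (rule eqp, rule eqb)
    also have "\<dots> = (\<Sum>mk\<in>?M \<times> ?N. act degB Delta (hpart degB degM (snd mk) phi) (bpart (fst mk) beta))"
      by (simp only: act_sum act_sum2 sum.cartesian_product case_prod_unfold)
    finally have 1: "act degB Delta phi beta = \<dots>" .
    have "?F (act degB Delta phi beta) = (\<Sum>mk\<in>?M \<times> ?N. ?F (act degB Delta (hpart degB degM (snd mk) phi) (bpart (fst mk) beta)))"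
      unfolding 1 fvee_def
      by (rule hext_sum_gen) (use finN finM in \<open>auto simp: fvee_h_zero fvee_h_add intro!: hom_gr_homog[OF homog_act] hpart_homog bpart_homog\<close>)
    also have "\<dots> = (\<Sum>mk\<in>?M \<times> ?N. fvee_h degB Delta eps f (snd mk + fst mk) (act degB Delta (hpart degB degM (snd mk) phi) (bpart (fst mk) beta)))"
      by (rule sum.cong[OF refl]) (rule F_homog[OF homog_act[OF hpart_homog bpart_homog]])
    also have "\<dots> = (\<Sum>mk\<in>?M \<times> ?N. act degB Delta (fvee_h degB Delta eps f (snd mk) (hpart degB degM (snd mk) phi)) (bpart (fst mk) beta))"
      by (simp only: fvee_act[OF bpart_homog])
    also have "\<dots> = act degB Delta (\<Sum>k\<in>?N. fvee_h degB Delta eps f k (hpart degB degM k phi)) (\<Sum>m\<in>?M. bpart m beta)"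
      by (simp only: act_sum act_sum2 sum.cartesian_product case_prod_unfold)
    also have "\<dots> = act degB Delta (?F phi) beta"
      by (simp only: F_decomp[OF phi] eqb[symmetric])
    finally show ?thesis .
  qed
  have g: "fvee degB Delta eps degM (\<lambda>y. lin dN (f y) - sc (ksign n) (lin f (dM y))) phi
                = dvee degB Delta eps d degN dN (?F phi) - hsc (ksign n) (?F (dvee degB Delta eps d degM dM phi))"
    if phi: "hom_gr degB degM phi" for phi
  proof -
    let ?S = "hdegs degB degM phi"
    let ?p = "\<lambda>k. hpart degB degM k phi"
    have fin: "finite ?S" using phi by (simp add: hom_gr_def)
    have "fvee degB Delta eps degM (\<lambda>y. lin dN (f y) - sc (ksign n) (lin f (dM y))) phi
        = (\<Sum>k\<in>?S. fvee_h degB Delta eps (\<lambda>y. lin dN (f y) - sc (ksign n) (lin f (dM y))) k (?p k))"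
      by (rule F_decomp[OF phi])
    also have "\<dots> = (\<Sum>k\<in>?S. dvee_h degB Delta eps d dN (k + n) (fvee_h degB Delta eps f k (?p k))
                  - hsc (ksign n) (fvee_h degB Delta eps f (k + 1) (dvee_h degB Delta eps d dM k (?p k))))"
      by (rule sum.cong[OF refl]) (simp add: fvee_d_h[OF f M] fun_eq_iff hsc_def)
    also have "\<dots> = (\<Sum>k\<in>?S. dvee_h degB Delta eps d dN (k + n) (fvee_h degB Delta eps f k (?p k)))
                  - hsc (ksign n) (\<Sum>k\<in>?S. fvee_h degB Delta eps f (k + 1) (dvee_h degB Delta eps d dM k (?p k)))"
      by (simp only: sum_subtractf hsc_sum)
    also have "(\<Sum>k\<in>?S. dvee_h degB Delta eps d dN (k + n) (fvee_h degB Delta eps f k (?p k)))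
        = dvee degB Delta eps d degN dN (?F phi)"
    proof -
      have "dvee degB Delta eps d degN dN (?F phi) = dvee degB Delta eps d degN dN (\<Sum>k\<in>?S. fvee_h degB Delta eps f k (?p k))"
        by (simp only: F_decomp[OF phi])
      also have "\<dots> = (\<Sum>k\<in>?S. dvee_h degB Delta eps d dN (k + n) (fvee_h degB Delta eps f k (?p k)))"
        unfolding dvee_def
        by (rule hext_sum) (use fin in \<open>auto simp: dvee_h_zero inj_on_def intro!: homog_fvee_h[OF deg] hpart_homog\<close>)
      finally show ?thesis by simp
    qed
    also have "(\<Sum>k\<in>?S. fvee_h degB Delta eps f (k + 1) (dvee_h degB Delta eps d dM k (?p k)))
        = ?F (dvee degB Delta eps d degM dM phi)"
    proof -
      have "?F (dvee degB Delta eps d degM dM phi) = ?F (\<Sum>k\<in>?S. dvee_h degB Delta eps d dM k (?p k))"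
        by (simp only: D_decomp[OF phi])
      also have "\<dots> = (\<Sum>k\<in>?S. fvee_h degB Delta eps f (k + 1) (dvee_h degB Delta eps d dM k (?p k)))"
        unfolding fvee_def
        by (rule hext_sum) (use fin in \<open>auto simp: fvee_h_zero inj_on_def intro!: homog_dvee_h[OF M] hpart_homog\<close>)
      finally show ?thesis by simp
    qed
    finally show ?thesis .
  qed
  show ?thesis using a b c dd e g by blast
qed

lemma fvee_fadd: "fvee degB Delta eps degM (\<lambda>y. f y + g y) phi = fvee degB Delta eps degM f phi + fvee degB Delta eps degM g phi"
  by (rule ext) (simp add: fvee_def hext_def fvee_h_fadd sum.distrib)

lemma fvee_fsc: "fvee degB Delta eps degM (\<lambda>y. sc c (f y)) phi = hsc c (fvee degB Delta eps degM f phi)"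
  by (rule ext) (simp add: fvee_def hext_def fvee_h_fsc hsc_def sc_sum)

lemma fvee_comp:
  assumes f: "comod_hom degB Delta degM degN n f" and phi: "hom_gr degB degM phi"
  shows "fvee degB Delta eps degM (\<lambda>y. lin g (f y)) phi = fvee degB Delta eps degN g (fvee degB Delta eps degM f phi)"
proof -
  let ?S = "hdegs degB degM phi"
  let ?p = "\<lambda>k. hpart degB degM k phi"
  have fin: "finite ?S" using phi by (simp add: hom_gr_def)
  have deg: "\<forall>y. \<forall>z\<in>Poly_Mapping.keys (f y). tdeg degB degN z = tdeg degB degM y + n"
    by (rule comod_deg[OF f])
  have "fvee degB Delta eps degN g (fvee degB Delta eps degM f phi) = fvee degB Delta eps degN g (\<Sum>k\<in>?S. fvee_h degB Delta eps f k (?p k))"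
    by (simp only: F_decomp[OF phi])
  also have "\<dots> = (\<Sum>k\<in>?S. fvee_h degB Delta eps g (k + n) (fvee_h degB Delta eps f k (?p k)))"
    unfolding fvee_def
    by (rule hext_sum) (use fin in \<open>auto simp: fvee_h_zero inj_on_def intro!: homog_fvee_h[OF deg] hpart_homog\<close>)
  also have "\<dots> = (\<Sum>k\<in>?S. fvee_h degB Delta eps (\<lambda>y. lin g (f y)) k (?p k))"
    by (simp only: fvee_comp_h[OF f])
  also have "\<dots> = fvee degB Delta eps degM (\<lambda>y. lin g (f y)) phi"
    by (rule F_decomp[OF phi, symmetric])
  finally show ?thesis by simp
qed

lemma fvee_id:
  assumes phi: "hom_gr degB degM phi"
  shows "fvee degB Delta eps degM bvec phi = phi"
proof -
  have fin: "finite (hdegs degB degM phi)" using phi by (simp add: hom_gr_def)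
  show ?thesis
    by (simp only: F_decomp[OF phi] fvee_id_h hpart_decomp[OF fin order_refl, symmetric])
qed

end


theorem proposition2p2:
  fixes degB :: "'b \<Rightarrow> int"
    and Delta :: "'b \<Rightarrow> ('b \<times> 'b \<Rightarrow>\<^sub>0 'k::field)"
    and eps :: "'b \<Rightarrow> 'k"
    and d :: "'b \<Rightarrow> ('b \<Rightarrow>\<^sub>0 'k)"
  assumes B: "dg_coalgebra degB Delta eps d"
  shows
    \<comment> \<open>(1) d_M^vee makes Hom_gr(B,M) a right dg-module over (B*, d)\<close>
    "(\<forall>(degM :: 'm \<Rightarrow> int) dM.
        free_dg_comodule degB Delta d degM dM \<longrightarrow>
        right_dg_module_hom degB Delta eps d degM (dvee degB Delta eps d degM dM))
     \<and>
     \<comment> \<open>(2) f |-> f^vee is a dg-functor\<close>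
     (\<forall>(degM :: 'm \<Rightarrow> int) dM (degN :: 'n \<Rightarrow> int) dN (degO :: 'o \<Rightarrow> int) dO.
        free_dg_comodule degB Delta d degM dM \<longrightarrow>
        free_dg_comodule degB Delta d degN dN \<longrightarrow>
        free_dg_comodule degB Delta d degO dO \<longrightarrow>
        \<comment> \<open>f^vee is a degree n morphism of right dg-modules, and F commutes with the Hom differentials\<close>
        (\<forall>n f. comod_hom degB Delta degM degN n f \<longrightarrow>
           (\<forall>phi. hom_gr degB degM phi \<longrightarrow> hom_gr degB degN (fvee degB Delta eps degM f phi)) \<and>
           (\<forall>k phi. hom_homog degB degM k phi \<longrightarrow>
              hom_homog degB degN (k + n) (fvee degB Delta eps degM f phi)) \<and>
           (\<forall>phi psi. hom_gr degB degM phi \<longrightarrow> hom_gr degB degM psi \<longrightarrow>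
              fvee degB Delta eps degM f (phi + psi)
                = fvee degB Delta eps degM f phi + fvee degB Delta eps degM f psi) \<and>
           (\<forall>c phi. hom_gr degB degM phi \<longrightarrow>
              fvee degB Delta eps degM f (hsc c phi) = hsc c (fvee degB Delta eps degM f phi)) \<and>
           (\<forall>phi beta. hom_gr degB degM phi \<longrightarrow> dual_el degB beta \<longrightarrow>
              fvee degB Delta eps degM f (act degB Delta phi beta)
                = act degB Delta (fvee degB Delta eps degM f phi) beta) \<and>
           (\<forall>phi. hom_gr degB degM phi \<longrightarrow>
              fvee degB Delta eps degM (\<lambda>y. lin dN (f y) - sc (ksign n) (lin f (dM y))) phi
                = dvee degB Delta eps d degN dN (fvee degB Delta eps degM f phi)
                  - hsc (ksign n) (fvee degB Delta eps degM f (dvee degB Delta eps d degM dM phi)))) \<and>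
        \<comment> \<open>k-linearity on morphisms\<close>
        (\<forall>n f g. comod_hom degB Delta degM degN n f \<longrightarrow> comod_hom degB Delta degM degN n g \<longrightarrow>
           (\<forall>phi. hom_gr degB degM phi \<longrightarrow>
              fvee degB Delta eps degM (\<lambda>y. f y + g y) phi
                = fvee degB Delta eps degM f phi + fvee degB Delta eps degM g phi)) \<and>
        (\<forall>n c f. comod_hom degB Delta degM degN n f \<longrightarrow>
           (\<forall>phi. hom_gr degB degM phi \<longrightarrow>
              fvee degB Delta eps degM (\<lambda>y. sc c (f y)) phi = hsc c (fvee degB Delta eps degM f phi))) \<and>
        \<comment> \<open>compatibility with composition and identities\<close>
        (\<forall>n m f g. comod_hom degB Delta degM degN n f \<longrightarrow> comod_hom degB Delta degN degO m g \<longrightarrow>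
           (\<forall>phi. hom_gr degB degM phi \<longrightarrow>
              fvee degB Delta eps degM (\<lambda>y. lin g (f y)) phi
                = fvee degB Delta eps degN g (fvee degB Delta eps degM f phi))) \<and>
        (\<forall>phi. hom_gr degB degM phi \<longrightarrow> fvee degB Delta eps degM bvec phi = phi))"
proof -
  interpret DGC degB Delta eps d by (rule DGC.intro) (rule B)
  show ?thesis
    apply (rule conjI)
     apply (intro allI impI)
     apply (erule part1)
    apply (intro allI impI)
    apply (intro conjI)
        apply (intro allI impI)
        apply (rule part2_single; assumption)
       apply (simp add: fvee_fadd)
      apply (simp add: fvee_fsc)
     apply (intro allI impI)
     apply (erule fvee_comp, assumption)
    apply (simp add: fvee_id)
    done
qed

end
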